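(* Let $A$ be an $n\times n$ Hermitian matrix ($n\ge2$) with eigenvalues $\lambda_1\ge\dots\ge\lambda_n$, and for $k=1,\dots,n$ let $\mu_{k,1}\ge\dots\ge\mu_{k,n-1}$ be the eigenvalues of $A_k$. Then for all $1\le\ell\le r\le n-1$, $$(n-\ell)\lambda_\ell+(n-1)\sum_{j=\ell+1}^r\lambda_j+r\lambda_n\le\sum_{k=1}^n\sum_{j=\ell}^r\mu_{k,j}\le(n-\ell)\lambda_1+(n-1)\sum_{j=\ell+1}^r\lambda_j+r\lambda_{r+1}.$$
   Context: For an $n\times n$ matrix $A$ and $k\in\{1,\dots,n\}$, $A_k$ denotes the $(n-1)\times(n-1)$ principal submatrix obtained by deleting the $k$-th row and $k$-th column of $A$. Empty sums are zero. *)

theory Defs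
  imports "Jordan_Normal_Form.Jordan_Normal_Form" "HOL-Computational_Algebra.Polynomial"
begin

definition hermitian :: "complex mat \<Rightarrow> bool" where
  "hermitian A \<longleftrightarrow> square_mat A \<and>
     (\<forall>i < dim_row A. \<forall>j < dim_row A. A $$ (i, j) = cnj (A $$ (j, i)))"

text \<open>For Hermitian matrices all eigenvalues
  are real, so taking real parts loses nothing.\<close>
definition eigvals_desc :: "complex mat \<Rightarrow> real list" where
  "eigvals_desc A = rev (sorted_list_of_multiset (image_mset Re (proots (char_poly A))))"

text \<open>1-indexed: eig A j is the j-th largest eigenvalue, j = 1..dim.\<close>
definition eig :: "complex mat \<Rightarrow> nat \<Rightarrow> real" where
  "eig A j = eigvals_desc A ! (j - 1)"

text \<open>Principal submatrix A_k (1-indexed k): delete k-th row and column.\<close>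
definition principal_sub :: "complex mat \<Rightarrow> nat \<Rightarrow> complex mat" where
  "principal_sub A k = mat_delete A (k - 1) (k - 1)"

end

theory Submission
  imports Defs "Jordan_Normal_Form.Schur_Decomposition"
begin

definition nrmv :: "complex vec \<Rightarrow> complex vec" where
  "nrmv w = complex_of_real (1 / sqrt (Re (w \<bullet>c w))) \<cdot>\<^sub>v w"

lemma sprodc_smult: assumes "v \<in> carrier_vec n" "w \<in> carrier_vec n"
  shows "(a \<cdot>\<^sub>v v) \<bullet>c (b \<cdot>\<^sub>v w) = a * cnj b * (v \<bullet>c w)"
  using assms unfolding scalar_prod_def by (simp add: sum_distrib_left mult_ac)

lemma sprodc_self_real: assumes "w \<in> carrier_vec n"
  shows "w \<bullet>c w = complex_of_real (Re (w \<bullet>c w))" and "w \<noteq> 0\<^sub>v n \<Longrightarrow> Re (w \<bullet>c w) > 0"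
proof -
  have ge: "w \<bullet>c w \<ge> 0" by (rule conjugate_square_ge_0_vec)
  then show "w \<bullet>c w = complex_of_real (Re (w \<bullet>c w))"
    by (simp add: complex_eq_iff less_eq_complex_def)
  assume "w \<noteq> 0\<^sub>v n"
  then have "w \<bullet>c w > 0" using conjugate_square_greater_0_vec[OF assms] by simp
  then show "Re (w \<bullet>c w) > 0" by (simp add: less_complex_def)
qed

lemma nrmv_carrier[simp]: "w \<in> carrier_vec n \<Longrightarrow> nrmv w \<in> carrier_vec n"
  unfolding nrmv_def by simp

lemma nrmv_unit: assumes w: "w \<in> carrier_vec n" and w0: "w \<noteq> 0\<^sub>v n"
  shows "nrmv w \<bullet>c nrmv w = 1"
proof -
  define r where "r = Re (w \<bullet>c w)"
  have r: "r > 0" "w \<bullet>c w = complex_of_real r" using sprodc_self_real[OF w] w0 unfolding r_def by auto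
  have "nrmv w \<bullet>c nrmv w = complex_of_real (1 / sqrt r) * cnj (complex_of_real (1 / sqrt r)) * complex_of_real r"
  proof -
    have nw: "nrmv w = complex_of_real (1 / sqrt r) \<cdot>\<^sub>v w" unfolding nrmv_def r_def ..
    have "nrmv w \<bullet>c nrmv w = complex_of_real (1 / sqrt r) * cnj (complex_of_real (1 / sqrt r)) * (w \<bullet>c w)"
      unfolding nw by (rule sprodc_smult[OF w w])
    then show ?thesis unfolding r(2) .
  qed
  also have "\<dots> = complex_of_real ((1 / sqrt r) * (1 / sqrt r) * r)"
    by (simp only: of_real_mult complex_cnj_complex_of_real)
  also have "(1 / sqrt r) * (1 / sqrt r) * r = 1" using r(1)
    by (simp add: field_simps)
  finally show ?thesis by simp
qed

lemma nrmv_id: assumes w: "w \<in> carrier_vec n" and u: "w \<bullet>c w = 1"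
  shows "nrmv w = w"
  unfolding nrmv_def u by simp

lemma nrmv_orth: assumes "v \<in> carrier_vec n" "w \<in> carrier_vec n" "v \<bullet>c w = 0"
  shows "nrmv v \<bullet>c nrmv w = 0"
  unfolding nrmv_def sprodc_smult[OF assms(1,2)] assms(3) by simp

lemma nrmv_eigen: assumes A: "A \<in> carrier_mat n n" and v: "v \<in> carrier_vec n" and ev: "A *\<^sub>v v = e \<cdot>\<^sub>v v"
  shows "A *\<^sub>v nrmv v = e \<cdot>\<^sub>v nrmv v"
  unfolding nrmv_def using A v ev by (simp add: mult_mat_vec smult_smult_assoc mult.commute)

lemma index_mat_adjoint[simp]:
  "dim_row (mat_adjoint M) = dim_col M" "dim_col (mat_adjoint M) = dim_row M"
  "i < dim_col M \<Longrightarrow> j < dim_row M \<Longrightarrow> mat_adjoint M $$ (i,j) = cnj (M $$ (j,i))"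
  unfolding mat_adjoint_def by (auto simp: mat_of_rows_def)

lemma mat_adjoint_carrier[simp]: "M \<in> carrier_mat r c \<Longrightarrow> mat_adjoint M \<in> carrier_mat c r"
  unfolding carrier_mat_def mat_adjoint_def by (simp add: mat_of_rows_def)

lemma mat_adjoint_mult: assumes "A \<in> carrier_mat r n" "B \<in> carrier_mat n c"
  shows "mat_adjoint (A * B) = mat_adjoint B * mat_adjoint (A :: complex mat)"
  by (rule eq_matI) (use assms in \<open>auto simp: scalar_prod_def cnj_sum mult.commute intro!: sum.cong\<close>)

lemma corthogonal_inv_unit: assumes W: "W \<in> carrier_mat n n"
  and u: "\<And>i. i < n \<Longrightarrow> col W i \<bullet>c col W i = (1::complex)"
  shows "corthogonal_inv W = mat_adjoint W"
proof -
  have mp: "map vec_inv (cols W) = map conjugate (cols W)"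
    using W u by (intro map_cong refl) (auto simp: vec_inv_def cols_def)
  show ?thesis unfolding corthogonal_inv_def mat_adjoint_def mp ..
qed

lemma mat_adjoint_block: assumes P: "P \<in> carrier_mat m m"
  shows "mat_adjoint (four_block_mat (1\<^sub>m 1) (0\<^sub>m 1 m) (0\<^sub>m m 1) P) =
    four_block_mat (1\<^sub>m 1) (0\<^sub>m 1 m) (0\<^sub>m m 1) (mat_adjoint (P :: complex mat))"
  by (rule eq_matI) (use P in auto)

lemma mat_adjoint_one: "mat_adjoint (1\<^sub>m n) = (1\<^sub>m n :: complex mat)"
  by (rule eq_matI) auto

lemma unitary_schur:
  assumes "(A::complex mat) \<in> carrier_mat n n"
      and "char_poly A = (\<Prod> (e :: complex) \<leftarrow> es. [:- e, 1:])"
  shows "\<exists>B P Q. similar_mat_wit A B P Q \<and> upper_triangular B \<and> diag_mat B = es \<and> Q = mat_adjoint P"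
  using assms
proof (induct es arbitrary: n A)
  case Nil
  then have A: "A \<in> carrier_mat n n" by auto
  with Nil degree_monic_char_poly[of A n] have n0: "n = 0" by auto
  have "similar_mat_wit A A (1\<^sub>m n) (1\<^sub>m n)" using A by (intro similar_mat_witI[of _ _ n]) auto
  moreover have "diag_mat A = []" using A n0 by (auto simp: diag_mat_def)
  moreover have "upper_triangular A" using A n0 by auto
  moreover have "1\<^sub>m n = mat_adjoint (1\<^sub>m n :: complex mat)" by (rule mat_adjoint_one[symmetric])
  ultimately show ?case by blast
next
  case (Cons e es n A)
  let ?n1 = "n - 1"
  from Cons have A: "A \<in> carrier_mat n n" and dim: "dim_row A = n" by auto
  let ?cp = "char_poly A"
  from Cons(3)
  have cp: "?cp = [: -e, 1 :] * (\<Prod>e \<leftarrow> es. [:- e, 1:])" by auto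
  have mon: "monic (\<Prod>e\<leftarrow> es. [:- e, 1:])" by (rule monic_prod_list, auto)
  have deg: "degree ?cp = Suc (degree (\<Prod>e\<leftarrow> es. [:- e, 1:]))" unfolding cp
    by (subst degree_mult_eq, insert mon, auto)
  with degree_monic_char_poly[OF A] have n: "n \<noteq> 0" by auto
  have e: "eigenvalue A e"
    unfolding eigenvalue_root_char_poly[OF A] cp by simp
  define v0 where "v0 = find_eigenvector A e"
  from find_eigenvector[OF A e] have ev0: "eigenvector A v0 e" unfolding v0_def .
  from this[unfolded eigenvector_def]
  have v0[simp]: "v0 \<in> carrier_vec n" and v00: "v0 \<noteq> 0\<^sub>v n" and ev0': "A *\<^sub>v v0 = e \<cdot>\<^sub>v v0"
    using A by auto
  define v where "v = nrmv v0"
  have v[simp]: "v \<in> carrier_vec n" unfolding v_def by simp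
  have vu: "v \<bullet>c v = 1" unfolding v_def by (rule nrmv_unit[OF v0 v00])
  have eigen[simp]: "A *\<^sub>v v = e \<cdot>\<^sub>v v" unfolding v_def by (rule nrmv_eigen[OF A v0 ev0'])
  have v0': "v \<noteq> 0\<^sub>v n" using vu by auto
  define b where "b = basis_completion v"
  define ws0 where "ws0 = gram_schmidt n b"
  define ws where "ws = map nrmv ws0"
  define W where "W = mat_of_cols n ws"
  define W' where "W' = corthogonal_inv W"
  define A' where "A' = W' * A * W"
  obtain A1 A2 A0 A3 where splitA': "split_block A' 1 1 = (A1,A2,A0,A3)"
    by (cases "split_block A' 1 1", auto)
  interpret cof_vec_space n "TYPE(complex)" .
  from basis_completion[OF v v0', folded b_def]
  have span_b: "span (set b) = carrier_vec n" and dist_b: "distinct b"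
    and indep: "\<not> lin_dep (set b)" and b: "set b \<subseteq> carrier_vec n" and hdb: "hd b = v"
    and len_b: "length b = n" by auto
  from hdb len_b n obtain vs where bv: "b = v # vs" by (cases b, auto)
  from gram_schmidt_result[OF b dist_b indep refl, folded ws0_def]
  have ws0: "set ws0 \<subseteq> carrier_vec n" "corthogonal ws0" "length ws0 = n"
    by (auto simp: len_b)
  from gram_schmidt_hd[OF v, of vs, folded bv] have hdws0: "hd ws0 = v" unfolding ws0_def .
  have ws0i: "ws0 ! i \<in> carrier_vec n" "ws0 ! i \<noteq> 0\<^sub>v n" if "i < n" for i
  proof -
    show c: "ws0 ! i \<in> carrier_vec n" using ws0 that by auto
    have "ws0 ! i \<bullet>c ws0 ! i \<noteq> 0" using corthogonalD[OF ws0(2), of i i] ws0(3) that by auto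
    then show "ws0 ! i \<noteq> 0\<^sub>v n" using c by auto
  qed
  have wsu: "ws ! i \<bullet>c ws ! i = 1" if "i < n" for i
    unfolding ws_def using that ws0(3) nrmv_unit[OF ws0i[OF that]] by simp
  have ws: "set ws \<subseteq> carrier_vec n" "corthogonal ws" "length ws = n"
  proof -
    show "set ws \<subseteq> carrier_vec n" using ws0(1) unfolding ws_def by auto
    show "length ws = n" unfolding ws_def using ws0 by simp
    show "corthogonal ws"
    proof (rule corthogonalI)
      fix i j assume i: "i < length ws" and j: "j < length ws"
      then have i': "i < n" and j': "j < n" unfolding ws_def using ws0 by auto
      show "ws ! i \<bullet>c ws ! j = 0 \<longleftrightarrow> i \<noteq> j"
      proof (cases "i = j")
        case True then show ?thesis using wsu[OF i'] by simp
      next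
        case False
        have "ws0 ! i \<bullet>c ws0 ! j = 0" using corthogonalD[OF ws0(2), of i j] ws0(3) i' j' False by auto
        then have "ws ! i \<bullet>c ws ! j = 0" unfolding ws_def using i' j' ws0(3)
          by (simp add: nrmv_orth[OF ws0i(1)[OF i'] ws0i(1)[OF j']])
        then show ?thesis using False by simp
      qed
    qed
  qed
  have hdws: "hd ws = v" unfolding ws_def using hdws0 ws0(3) n
    by (cases ws0) (auto simp: nrmv_id[OF v vu])
  have orth_W: "corthogonal_mat W" using orthogonal_mat_of_cols ws unfolding W_def.
  have W: "W \<in> carrier_mat n n"
    using ws unfolding W_def using mat_of_cols_carrier(1)[of n ws] by auto
  have W'adj: "W' = mat_adjoint W" unfolding W'_def
  proof (rule corthogonal_inv_unit[OF W])
    fix i assume i: "i < n"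
    have "col (mat_of_cols n ws) i = ws ! i" by (rule col_mat_of_cols) (use ws i in auto)
    then show "col W i \<bullet>c col W i = 1" unfolding W_def using wsu[OF i] by simp
  qed
  have W': "W' \<in> carrier_mat n n" unfolding W'_def corthogonal_inv_def using W
    by (auto simp: mat_of_rows_def)
  from corthogonal_inv_result[OF orth_W]
  have W'W: "inverts_mat W' W" unfolding W'_def .
  hence WW': "inverts_mat W W'" using mat_mult_left_right_inverse[OF W' W] W' W
    unfolding inverts_mat_def by auto
  have A': "A' \<in> carrier_mat n n" using W W' A unfolding A'_def by auto
  have A'A_wit: "similar_mat_wit A' A W' W"
    by (rule similar_mat_witI[of _ _ n], insert W W' A A' W'W WW', auto simp: A'_def
    inverts_mat_def)
  hence A'A: "similar_mat A' A" unfolding similar_mat_def by blast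
  from similar_mat_wit_sym[OF A'A_wit] have simAA': "similar_mat_wit A A' W W'" by auto
  let ?f = "(\<lambda> i. if i = 0 then e else 0)"
  have col0: "col A' 0 = vec n ?f"
    unfolding A'_def W'_def W_def
    using corthogonal_col_ev_0[OF A v v0' eigen n hdws ws].
  from A' n have "dim_row A' = 1 + ?n1" "dim_col A' = 1 + ?n1" by auto
  from split_block[OF splitA' this] have A2: "A2 \<in> carrier_mat 1 ?n1"
    and A3: "A3 \<in> carrier_mat ?n1 ?n1"
    and A'block: "A' = four_block_mat A1 A2 A0 A3" by auto
  have A1id: "A1 = mat 1 1 (\<lambda> _. e)"
    using splitA'[unfolded split_block_def Let_def] arg_cong[OF col0, of "\<lambda> v. v $ 0"] A' n
    by (auto simp: col_def)
  have A1: "A1 \<in> carrier_mat 1 1" unfolding A1id by auto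
  {
    fix i
    assume "i < ?n1"
    with arg_cong[OF col0, of "\<lambda> v. v $ Suc i"] A'
    have "A' $$ (Suc i, 0) = 0" by auto
  } note A'0 = this
  have A0id: "A0 = 0\<^sub>m ?n1 1"
    using splitA'[unfolded split_block_def Let_def] A'0 A' by auto
  have A0: "A0 \<in> carrier_mat ?n1 1" unfolding A0id by auto
  from cp char_poly_similar[OF A'A]
  have cp: "char_poly A' = [: -e,1 :] * (\<Prod> e \<leftarrow> es. [:- e, 1:])" by simp
  also have "char_poly A' = char_poly A1 * char_poly A3"
    unfolding A'block A0id
    by (rule char_poly_four_block_zeros_col[OF A1 A2 A3])
  also have "char_poly A1 = [: -e,1 :]"
    by (simp add: A1id char_poly_defs det_def sign_def)
  finally have cp: "char_poly A3 = (\<Prod> e \<leftarrow> es. [:- e, 1:])"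
    by (metis mult_cancel_left pCons_eq_0_iff zero_neq_one)
  from Cons(1)[OF A3 cp] obtain B P' Q' where
    simIH: "similar_mat_wit A3 B P' Q'" and ut: "upper_triangular B" and diag: "diag_mat B = es"
    and Q'adj: "Q' = mat_adjoint P'" by blast
  from similar_mat_witD2[OF A3 simIH]
  have B: "B \<in> carrier_mat ?n1 ?n1" and P': "P' \<in> carrier_mat ?n1 ?n1" and Q': "Q' \<in> carrier_mat ?n1 ?n1"
    and PQ': "P' * Q' = 1\<^sub>m ?n1" by auto
  let ?P' = "four_block_mat (1\<^sub>m 1) (0\<^sub>m 1 ?n1) (0\<^sub>m ?n1 1) P'"
  let ?Q' = "four_block_mat (1\<^sub>m 1) (0\<^sub>m 1 ?n1) (0\<^sub>m ?n1 1) Q'"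
  define C where "C = four_block_mat A1 (A2 * P') A0 B"
  have A0_eq: "A0 = P' * A0 * 1\<^sub>m 1" unfolding A0id using P' by auto
  have simA'C: "similar_mat_wit A' C ?P' ?Q'" unfolding A'block C_def
    by (rule similar_mat_wit_four_block[OF similar_mat_wit_refl[OF A1] simIH _ A0_eq A1 A3 A0],
    insert PQ' A2 P' Q', auto)
  have ut1: "upper_triangular A1" unfolding A1id by auto
  have utC: "upper_triangular C" unfolding C_def A0id
    by (intro upper_triangular_four_block[OF _ B ut1 ut], auto simp: A1id)
  from A1id have diagA1: "diag_mat A1 = [e]" unfolding diag_mat_def by auto
  from diag_four_block_mat[OF A1 B] have diagC: "diag_mat C = e # es" unfolding diag diagA1 C_def by simp
  have P'c: "?P' \<in> carrier_mat n n" using P' n by auto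
  have adj: "?Q' * W' = mat_adjoint (W * ?P')"
    unfolding mat_adjoint_mult[OF W P'c] W'adj Q'adj mat_adjoint_block[OF P'] ..
  have sw: "similar_mat_wit A C (W * ?P') (?Q' * W')" by (rule similar_mat_wit_trans[OF simAA' simA'C])
  have fin: "similar_mat_wit A C (W * ?P') (?Q' * W') \<and> upper_triangular C \<and> diag_mat C = e # es
    \<and> ?Q' * W' = mat_adjoint (W * ?P')"
    by (intro conjI) (rule sw, rule utC, rule diagC, rule adj)
  show ?case by (rule exI[of _ C], rule exI[of _ "W * ?P'"], rule exI[of _ "?Q' * W'"]) (rule fin)
qed


definition ipn :: "nat \<Rightarrow> (nat \<Rightarrow> complex) \<Rightarrow> (nat \<Rightarrow> complex) \<Rightarrow> complex" where
  "ipn m x y = (\<Sum>i<m. cnj (x i) * y i)"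

definition nrm2 :: "nat \<Rightarrow> (nat \<Rightarrow> complex) \<Rightarrow> real" where
  "nrm2 m x = (\<Sum>i<m. (cmod (x i))\<^sup>2)"

definition qf :: "nat \<Rightarrow> complex mat \<Rightarrow> (nat \<Rightarrow> complex) \<Rightarrow> complex" where
  "qf m M x = (\<Sum>i<m. \<Sum>i'<m. cnj (x i) * M $$ (i,i') * x i')"

definition edecomp :: "nat \<Rightarrow> complex mat \<Rightarrow> (nat \<Rightarrow> nat \<Rightarrow> complex) \<Rightarrow> (nat \<Rightarrow> real) \<Rightarrow> bool" where
  "edecomp m M U \<nu> \<longleftrightarrow>
   (\<forall>j<m. \<forall>j'<m. (\<Sum>i<m. cnj (U i j) * U i j') = (if j = j' then 1 else 0)) \<and>
   (\<forall>i<m. \<forall>i'<m. (\<Sum>j<m. U i j * cnj (U i' j)) = (if i = i' then 1 else 0)) \<and>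
   (\<forall>i<m. \<forall>j<m. (\<Sum>i'<m. M $$ (i,i') * U i' j) = of_real (\<nu> j) * U i j)"

definition orthn :: "nat \<Rightarrow> nat \<Rightarrow> (nat \<Rightarrow> nat \<Rightarrow> complex) \<Rightarrow> bool" where
  "orthn m s X \<longleftrightarrow> (\<forall>q<s. \<forall>q'<s. ipn m (X q) (X q') = (if q = q' then 1 else 0))"

lemma cnj_mult_self: "cnj z * z = of_real ((cmod z)\<^sup>2)"
  by (metis complex_norm_square mult.commute)

lemma of_real_cmod_sq: "complex_of_real ((cmod z)\<^sup>2) = z * cnj z"
  by (metis complex_norm_square)

lemma of_real_cmod_sq': "complex_of_real ((cmod z)\<^sup>2) = cnj z * z"
  by (subst mult.commute) (rule of_real_cmod_sq)

lemma cnj_ipn: "cnj (ipn m x y) = ipn m y x"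
  unfolding ipn_def by (simp add: mult.commute)

lemma nrm2_ipn: "of_real (nrm2 m x) = ipn m x x"
  unfolding nrm2_def ipn_def by (simp add: cnj_mult_self)

lemma expand_complete:
  assumes "edecomp m M U \<nu>" and "i < m"
  shows "(\<Sum>j<m. U i j * ipn m (\<lambda>i. U i j) x) = x i"
proof -
  have "(\<Sum>j<m. U i j * ipn m (\<lambda>i. U i j) x) = (\<Sum>j<m. \<Sum>i'<m. U i j * cnj (U i' j) * x i')"
    unfolding ipn_def by (simp add: sum_distrib_left mult.assoc)
  also have "\<dots> = (\<Sum>i'<m. (\<Sum>j<m. U i j * cnj (U i' j)) * x i')"
    by (subst sum.swap) (simp add: sum_distrib_right)
  also have "\<dots> = (\<Sum>i'<m. if i = i' then x i' else 0)"
    using assms unfolding edecomp_def by (intro sum.cong) auto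
  also have "\<dots> = x i" using assms(2) by simp
  finally show ?thesis .
qed

lemma parseval:
  assumes "edecomp m M U \<nu>"
  shows "(\<Sum>j<m. (cmod (ipn m (\<lambda>i. U i j) x))\<^sup>2) = nrm2 m x"
proof -
  let ?c = "\<lambda>j. ipn m (\<lambda>i. U i j) x"
  have "of_real (\<Sum>j<m. (cmod (?c j))\<^sup>2) = (\<Sum>j<m. ?c j * cnj (?c j))"
    by (simp only: of_real_sum of_real_cmod_sq)
  also have "\<dots> = (\<Sum>j<m. \<Sum>i<m. cnj (x i) * (U i j * ?c j))"
    unfolding ipn_def[of m "\<lambda>i. U i j" x for j]
    by (simp add: sum_distrib_left sum_distrib_right mult_ac)
  also have "\<dots> = (\<Sum>i<m. cnj (x i) * (\<Sum>j<m. U i j * ?c j))"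
    by (subst sum.swap) (simp add: sum_distrib_left)
  also have "\<dots> = (\<Sum>i<m. cnj (x i) * x i)"
    using expand_complete[OF assms] by (intro sum.cong) auto
  also have "\<dots> = of_real (nrm2 m x)" by (simp add: nrm2_ipn ipn_def)
  finally show ?thesis by (simp only: of_real_eq_iff)
qed

lemma qf_expand:
  assumes "edecomp m M U \<nu>"
  shows "qf m M x = of_real (\<Sum>j<m. \<nu> j * (cmod (ipn m (\<lambda>i. U i j) x))\<^sup>2)"
proof -
  let ?c = "\<lambda>j. ipn m (\<lambda>i. U i j) x"
  have ev: "\<And>i j. i < m \<Longrightarrow> j < m \<Longrightarrow> (\<Sum>i'<m. M $$ (i,i') * U i' j) = of_real (\<nu> j) * U i j"
    using assms unfolding edecomp_def by auto
  have Mx: "(\<Sum>i'<m. M $$ (i,i') * x i') = (\<Sum>j<m. ?c j * of_real (\<nu> j) * U i j)" if i: "i < m" for i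
  proof -
    have "(\<Sum>i'<m. M $$ (i,i') * x i') = (\<Sum>i'<m. M $$ (i,i') * (\<Sum>j<m. U i' j * ?c j))"
      using expand_complete[OF assms] by (intro sum.cong) auto
    also have "\<dots> = (\<Sum>j<m. ?c j * (\<Sum>i'<m. M $$ (i,i') * U i' j))"
      by (simp add: sum_distrib_left sum_distrib_right mult_ac) (subst sum.swap, simp)
    also have "\<dots> = (\<Sum>j<m. ?c j * of_real (\<nu> j) * U i j)"
      using ev[OF i] by (intro sum.cong) auto
    finally show ?thesis .
  qed
  have "qf m M x = (\<Sum>i<m. cnj (x i) * (\<Sum>i'<m. M $$ (i,i') * x i'))"
    unfolding qf_def by (simp add: sum_distrib_left mult.assoc)
  also have "\<dots> = (\<Sum>i<m. cnj (x i) * (\<Sum>j<m. ?c j * of_real (\<nu> j) * U i j))"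
    using Mx by (intro sum.cong) auto
  also have "\<dots> = (\<Sum>j<m. ?c j * of_real (\<nu> j) * (\<Sum>i<m. cnj (x i) * U i j))"
    by (simp add: sum_distrib_left sum_distrib_right mult_ac) (subst sum.swap, simp)
  also have "\<dots> = (\<Sum>j<m. of_real (\<nu> j) * (?c j * cnj (?c j)))"
  proof (intro sum.cong refl)
    fix j assume "j \<in> {..<m}"
    have "(\<Sum>i<m. cnj (x i) * U i j) = cnj (?c j)" by (simp add: cnj_ipn) (simp add: ipn_def)
    then show "?c j * of_real (\<nu> j) * (\<Sum>i<m. cnj (x i) * U i j) = of_real (\<nu> j) * (?c j * cnj (?c j))"
      by simp
  qed
  also have "\<dots> = of_real (\<Sum>j<m. \<nu> j * (cmod (?c j))\<^sup>2)"
    by (simp only: of_real_sum of_real_mult of_real_cmod_sq)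
  finally show ?thesis .
qed

lemma ipn_diff: "ipn m (\<lambda>i. x i - y i) (\<lambda>i. x i - y i) = ipn m x x - ipn m x y - ipn m y x + ipn m y y"
proof -
  have "\<And>i. cnj (x i - y i) * (x i - y i) = cnj (x i) * x i - cnj (x i) * y i - cnj (y i) * x i + cnj (y i) * y i"
    by (simp add: algebra_simps)
  then show ?thesis unfolding ipn_def by (simp add: sum.distrib sum_subtractf)
qed
lemma ipn_lin_right: "ipn m y (\<lambda>i. \<Sum>q<s. a q * X q i) = (\<Sum>q<s. a q * ipn m y (X q))"
  unfolding ipn_def sum_distrib_left by (subst sum.swap) (simp add: mult_ac)
lemma ipn_lin_left: "ipn m (\<lambda>i. \<Sum>q<s. a q * X q i) y = (\<Sum>q<s. cnj (a q) * ipn m (X q) y)"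
  unfolding ipn_def sum_distrib_left cnj_sum sum_distrib_right by (subst sum.swap) (simp add: mult_ac)

lemma bessel:
  assumes "orthn m s X"
  shows "(\<Sum>q<s. (cmod (ipn m (X q) z))\<^sup>2) \<le> nrm2 m z"
proof -
  define c where "c q = ipn m (X q) z" for q
  define w where "w i = (\<Sum>q<s. c q * X q i)" for i
  define S where "S = (\<Sum>q<s. (cmod (c q))\<^sup>2)"
  have S: "of_real S = (\<Sum>q<s. cnj (c q) * c q)"
    by (simp only: S_def of_real_sum of_real_cmod_sq')
  have zw: "ipn m z w = of_real S"
  proof -
    have "ipn m z (X q) = cnj (c q)" for q unfolding c_def cnj_ipn ..
    then show ?thesis unfolding S w_def ipn_lin_right by (simp add: mult.commute)
  qed
  have wz: "ipn m w z = of_real S"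
    unfolding S w_def ipn_lin_left by (intro sum.cong) (auto simp: c_def)
  have ww: "ipn m w w = of_real S"
  proof -
    have "ipn m w w = (\<Sum>q<s. cnj (c q) * ipn m (X q) w)"
      unfolding w_def[abs_def] ipn_lin_left ..
    also have "\<dots> = (\<Sum>q<s. cnj (c q) * c q)"
    proof (intro sum.cong refl)
      fix q assume q: "q \<in> {..<s}"
      have "ipn m (X q) w = (\<Sum>q'<s. c q' * ipn m (X q) (X q'))"
        unfolding w_def[abs_def] ipn_lin_right ..
      also have "\<dots> = (\<Sum>q'<s. if q = q' then c q' else 0)"
        using assms q unfolding orthn_def by (intro sum.cong) auto
      also have "\<dots> = c q" using q by simp
      finally show "cnj (c q) * ipn m (X q) w = cnj (c q) * c q" by simp
    qed
    finally show ?thesis using S by simp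
  qed
  have "of_real (nrm2 m (\<lambda>i. z i - w i)) = ipn m z z - of_real S"
    unfolding nrm2_ipn ipn_diff zw wz ww by simp
  also have "\<dots> = of_real (nrm2 m z - S)" by (simp add: nrm2_ipn)
  finally have "nrm2 m (\<lambda>i. z i - w i) = nrm2 m z - S" by (simp only: of_real_eq_iff)
  moreover have "nrm2 m (\<lambda>i. z i - w i) \<ge> 0" unfolding nrm2_def by (intro sum_nonneg) auto
  ultimately show ?thesis unfolding S_def c_def by simp
qed

lemma bathtub:
  fixes lam c :: "nat \<Rightarrow> real"
  assumes fin: "finite I" and JI: "J \<subseteq> I"
    and hJ: "\<And>i. i \<in> J \<Longrightarrow> (lam i - p) * (C - c i) \<ge> 0"
    and hI: "\<And>i. i \<in> I - J \<Longrightarrow> (p - lam i) * c i \<ge> 0"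
    and tot: "sum c I = C * real (card J) + rho"
  shows "(\<Sum>i\<in>I. lam i * c i) \<le> C * sum lam J + rho * p"
proof -
  have s1: "(\<Sum>i\<in>I. lam i * c i) = (\<Sum>i\<in>J. lam i * c i) + (\<Sum>i\<in>I-J. lam i * c i)"
    using sum.subset_diff[OF JI fin, of "\<lambda>i. lam i * c i"] by linarith
  have s2: "sum c I = sum c J + sum c (I - J)"
    using sum.subset_diff[OF JI fin, of c] by linarith
  have a: "(\<Sum>i\<in>J. (lam i - p) * (C - c i)) \<ge> 0" using hJ by (intro sum_nonneg) auto
  have b: "(\<Sum>i\<in>I-J. (p - lam i) * c i) \<ge> 0" using hI by (intro sum_nonneg) auto
  have a': "(\<Sum>i\<in>J. (lam i - p) * (C - c i)) = C * sum lam J - (\<Sum>i\<in>J. lam i * c i) - p * C * real (card J) + p * sum c J"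
    by (simp add: algebra_simps sum_subtractf sum.distrib sum_distrib_left)
  have b': "(\<Sum>i\<in>I-J. (p - lam i) * c i) = p * sum c (I-J) - (\<Sum>i\<in>I-J. lam i * c i)"
    by (simp add: algebra_simps sum_subtractf sum_distrib_left)
  have "p * (sum c J + sum c (I-J)) = p * (rho + C * real (card J))" using s2 tot by simp
  then have e: "p * sum c J + p * sum c (I-J) = p * rho + p * C * real (card J)"
    by (simp add: algebra_simps)
  have rp: "rho * p = p * rho" by simp
  from a b show ?thesis unfolding a' b' s1 rp using e by linarith
qed

lemma nrm2_col:
  assumes "edecomp m M U \<nu>" "j < m"
  shows "nrm2 m (\<lambda>i. U i j) = 1"
proof -
  have "of_real (nrm2 m (\<lambda>i. U i j)) = (1::complex)"
    unfolding nrm2_ipn using assms unfolding edecomp_def ipn_def by auto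
  then show ?thesis by (simp only: of_real_eq_1_iff)
qed

lemma nrm2_orthn:
  assumes "orthn m s X" "q < s"
  shows "nrm2 m (X q) = 1"
proof -
  have "of_real (nrm2 m (X q)) = (1::complex)"
    unfolding nrm2_ipn using assms unfolding orthn_def by auto
  then show ?thesis by (simp only: of_real_eq_1_iff)
qed

lemma re_qf_expand:
  assumes "edecomp m M U \<nu>"
  shows "Re (qf m M x) = (\<Sum>j<m. \<nu> j * (cmod (ipn m (\<lambda>i. U i j) x))\<^sup>2)"
  unfolding qf_expand[OF assms] by simp

lemma kyfan_coeffs:
  assumes ed: "edecomp m M W \<nu>" and X: "orthn m s X"
  defines "g \<equiv> \<lambda>j. (\<Sum>q<s. (cmod (ipn m (\<lambda>i. W i j) (X q)))\<^sup>2)"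
  shows "(\<Sum>q<s. Re (qf m M (X q))) = (\<Sum>j<m. \<nu> j * g j)"
    and "\<And>j. j < m \<Longrightarrow> 0 \<le> g j \<and> g j \<le> 1"
    and "sum g {..<m} = real s"
proof -
  show "(\<Sum>q<s. Re (qf m M (X q))) = (\<Sum>j<m. \<nu> j * g j)"
    unfolding re_qf_expand[OF ed] g_def by (simp add: sum_distrib_left) (subst sum.swap, simp)
  show "0 \<le> g j \<and> g j \<le> 1" if j: "j < m" for j
  proof
    show "0 \<le> g j" unfolding g_def by (intro sum_nonneg) auto
    have "g j = (\<Sum>q<s. (cmod (ipn m (X q) (\<lambda>i. W i j)))\<^sup>2)"
      unfolding g_def by (intro sum.cong refl) (metis cnj_ipn complex_mod_cnj)
    also have "\<dots> \<le> nrm2 m (\<lambda>i. W i j)" by (rule bessel[OF X])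
    also have "\<dots> = 1" using nrm2_col[OF ed j] .
    finally show "g j \<le> 1" .
  qed
  have "sum g {..<m} = (\<Sum>q<s. nrm2 m (X q))"
    unfolding g_def parseval[OF ed, symmetric] by (subst sum.swap) simp
  also have "\<dots> = (\<Sum>q<s. 1)" using nrm2_orthn[OF X] by (intro sum.cong) auto
  finally show "sum g {..<m} = real s" by simp
qed

lemma kyfan_top:
  assumes ed: "edecomp m M W \<nu>" and X: "orthn m s X" and sm: "s \<le> m"
    and mono: "\<And>j j'. j \<le> j' \<Longrightarrow> j' < m \<Longrightarrow> \<nu> j' \<le> \<nu> j"
  shows "(\<Sum>q<s. Re (qf m M (X q))) \<le> (\<Sum>j<s. \<nu> j)"
proof -
  define g where "g = (\<lambda>j. (\<Sum>q<s. (cmod (ipn m (\<lambda>i. W i j) (X q)))\<^sup>2))"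
  have kc1: "(\<Sum>q<s. Re (qf m M (X q))) = (\<Sum>j<m. \<nu> j * g j)"
    unfolding g_def by (rule kyfan_coeffs(1)[OF ed X])
  have kc2: "0 \<le> g j" "g j \<le> 1" if "j < m" for j
    unfolding g_def using kyfan_coeffs(2)[OF ed X that] by auto
  have kc3: "sum g {..<m} = real s"
    unfolding g_def by (rule kyfan_coeffs(3)[OF ed X])
  define p where "p = (if s = 0 then \<nu> 0 else \<nu> (s - 1))"
  have "(\<Sum>j\<in>{..<m}. \<nu> j * g j) \<le> 1 * sum \<nu> {..<s} + 0 * p"
  proof (rule bathtub)
    show "{..<s} \<subseteq> {..<m}" using sm by auto
    show "0 \<le> (\<nu> i - p) * (1 - g i)" if "i \<in> {..<s}" for i
    proof (rule mult_nonneg_nonneg)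
      have "i \<le> s - 1" "s - 1 < m" "s \<noteq> 0" using that sm by auto
      then show "0 \<le> \<nu> i - p" unfolding p_def using mono[of i "s - 1"] by simp
      show "0 \<le> 1 - g i" using kc2[of i] that sm by simp
    qed
    show "0 \<le> (p - \<nu> i) * g i" if "i \<in> {..<m} - {..<s}" for i
    proof (rule mult_nonneg_nonneg)
      have i: "s \<le> i" "i < m" using that by auto
      show "0 \<le> p - \<nu> i"
      proof (cases "s = 0")
        case True then show ?thesis unfolding p_def using mono[of 0 i] i by simp
      next
        case False then show ?thesis unfolding p_def using mono[of "s - 1" i] i by simp
      qed
      show "0 \<le> g i" using kc2[of i] i by simp
    qed
    show "sum g {..<m} = 1 * real (card {..<s}) + 0" using kc3 by simp
  qed simp
  then show ?thesis using kc1 by simp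
qed

lemma kyfan_bot:
  assumes ed: "edecomp m M W \<nu>" and X: "orthn m s X" and sm: "s \<le> m"
    and mono: "\<And>j j'. j \<le> j' \<Longrightarrow> j' < m \<Longrightarrow> \<nu> j' \<le> \<nu> j"
  shows "(\<Sum>j\<in>{m-s..<m}. \<nu> j) \<le> (\<Sum>q<s. Re (qf m M (X q)))"
proof -
  define g where "g = (\<lambda>j. (\<Sum>q<s. (cmod (ipn m (\<lambda>i. W i j) (X q)))\<^sup>2))"
  have kc1: "(\<Sum>q<s. Re (qf m M (X q))) = (\<Sum>j<m. \<nu> j * g j)"
    unfolding g_def by (rule kyfan_coeffs(1)[OF ed X])
  have kc2: "0 \<le> g j" "g j \<le> 1" if "j < m" for j
    unfolding g_def using kyfan_coeffs(2)[OF ed X that] by auto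
  have kc3: "sum g {..<m} = real s"
    unfolding g_def by (rule kyfan_coeffs(3)[OF ed X])
  define p where "p = - (if s = 0 then \<nu> (m - 1) else \<nu> (m - s))"
  have "(\<Sum>j\<in>{..<m}. (- \<nu> j) * g j) \<le> 1 * sum (\<lambda>j. - \<nu> j) {m-s..<m} + 0 * p"
  proof (rule bathtub)
    show "{m-s..<m} \<subseteq> {..<m}" by auto
    show "0 \<le> (- \<nu> i - p) * (1 - g i)" if "i \<in> {m-s..<m}" for i
    proof (rule mult_nonneg_nonneg)
      have "m - s \<le> i" "i < m" "s \<noteq> 0" using that sm by auto
      then show "0 \<le> - \<nu> i - p" unfolding p_def using mono[of "m - s" i] by simp
      show "0 \<le> 1 - g i" using kc2[of i] that sm by simp
    qed
    show "0 \<le> (p - - \<nu> i) * g i" if "i \<in> {..<m} - {m-s..<m}" for i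
    proof (rule mult_nonneg_nonneg)
      have i: "i < m - s" "i < m" using that by auto
      show "0 \<le> p - - \<nu> i"
      proof (cases "s = 0")
        case True then show ?thesis unfolding p_def using mono[of i "m - 1"] i by simp
      next
        case False then show ?thesis unfolding p_def using mono[of i "m - s"] i by simp
      qed
      show "0 \<le> g i" using kc2[of i] i by simp
    qed
    have "card {m-s..<m} = s" using sm by simp
    then show "sum g {..<m} = 1 * real (card {m-s..<m}) + 0" using kc3 by simp
  qed simp
  moreover have "(\<Sum>j<m. - \<nu> j * g j) = - (\<Sum>j<m. \<nu> j * g j)"
    by (simp only: mult_minus_left sum_negf)
  moreover have "(\<Sum>j\<in>{m-s..<m}. - \<nu> j) = - sum \<nu> {m-s..<m}" by (rule sum_negf)
  ultimately show ?thesis using kc1 by linarith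
qed


lemma herm_entry: assumes "hermitian A" "A \<in> carrier_mat n n" "i < n" "j < n"
  shows "A $$ (i,j) = cnj (A $$ (j,i))"
proof -
  have "\<forall>i<dim_row A. \<forall>j<dim_row A. A $$ (i, j) = cnj (A $$ (j, i))"
    using assms(1) unfolding hermitian_def by blast
  moreover have "dim_row A = n" using assms(2) by simp
  ultimately show ?thesis using assms(3,4) by blast
qed

lemma qf_real: assumes A: "A \<in> carrier_mat n n" and h: "hermitian A"
  shows "cnj (qf n A x) = qf n A x"
proof -
  have "cnj (qf n A x) = (\<Sum>i<n. \<Sum>i'<n. x i * cnj (A $$ (i,i')) * cnj (x i'))"
    unfolding qf_def by (simp add: cnj_sum)
  also have "\<dots> = (\<Sum>i<n. \<Sum>i'<n. x i * A $$ (i',i) * cnj (x i'))"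
  proof (intro sum.cong refl)
    fix i i' assume "i \<in> {..<n}" "i' \<in> {..<n}"
    then have "cnj (A $$ (i,i')) = A $$ (i',i)" using herm_entry[OF h A, of i' i] by simp
    then show "x i * cnj (A $$ (i,i')) * cnj (x i') = x i * A $$ (i',i) * cnj (x i')" by simp
  qed
  also have "\<dots> = qf n A x" unfolding qf_def by (subst sum.swap) (simp add: mult_ac)
  finally show ?thesis .
qed

lemma herm_eigenvalue_real: assumes A: "A \<in> carrier_mat n n" and h: "hermitian A"
  and e: "eigenvalue A e" shows "complex_of_real (Re e) = e"
proof -
  obtain v where v: "v \<in> carrier_vec n" "v \<noteq> 0\<^sub>v n" "A *\<^sub>v v = e \<cdot>\<^sub>v v"
    using e A unfolding eigenvalue_def eigenvector_def by auto
  define x where "x i = v $ i" for i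
  have Ax: "(\<Sum>i'<n. A $$ (i,i') * x i') = e * x i" if "i < n" for i
  proof -
    have "(A *\<^sub>v v) $ i = e * x i" using v(3) that v(1) A unfolding x_def by simp
    then show ?thesis using that A v(1) unfolding x_def
      by (simp add: scalar_prod_def row_def lessThan_atLeast0)
  qed
  have "qf n A x = (\<Sum>i<n. cnj (x i) * (\<Sum>i'<n. A $$ (i,i') * x i'))"
    unfolding qf_def by (simp add: sum_distrib_left mult.assoc)
  also have "\<dots> = (\<Sum>i<n. e * (cnj (x i) * x i))" using Ax by (intro sum.cong) (auto simp: mult_ac)
  also have "\<dots> = e * of_real (nrm2 n x)" unfolding nrm2_ipn ipn_def sum_distrib_left ..
  finally have q: "qf n A x = e * of_real (nrm2 n x)" .
  have "nrm2 n x \<noteq> 0"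
  proof
    assume "nrm2 n x = 0"
    then have "\<forall>i\<in>{..<n}. (cmod (x i))\<^sup>2 = 0" unfolding nrm2_def by (subst sum_nonneg_eq_0_iff[symmetric]) auto
    then have "v = 0\<^sub>v n" using v(1) unfolding x_def by (intro eq_vecI) auto
    then show False using v(2) by simp
  qed
  moreover have "cnj e * of_real (nrm2 n x) = e * of_real (nrm2 n x)"
    using qf_real[OF A h, of x] unfolding q by simp
  ultimately have "cnj e = e" by simp
  then have "Im e = 0" by (simp add: complex_eq_iff)
  then show ?thesis by (simp add: complex_eq_iff)
qed

lemma proots_linear_prod: "proots (\<Prod>a\<leftarrow>as. [:- a, 1:]) = mset (as :: complex list)"
proof (induct as)
  case (Cons a as)
  have nz: "(\<Prod>a\<leftarrow>as. [:- a, 1:]) \<noteq> 0" by (auto simp: prod_list_zero_iff)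
  have pm: "proots ([:- a, 1:] * (\<Prod>a\<leftarrow>as. [:- a, 1:])) = proots [:- a, 1:] + proots (\<Prod>a\<leftarrow>as. [:- a, 1:])"
    by (rule proots_mult) (auto simp: nz)
  have pl: "proots [:- a, 1:] = {#a#}" using proots_linear_factor[of "-a"] by simp
  have "proots (\<Prod>a\<leftarrow>a # as. [:- a, 1:]) = proots ([:- a, 1:] * (\<Prod>a\<leftarrow>as. [:- a, 1:]))" by simp
  also have "\<dots> = {#a#} + mset as" unfolding pm pl Cons.hyps ..
  finally show ?case by simp
qed simp

lemma eigvals_props: assumes A: "A \<in> carrier_mat n n" and h: "hermitian A"
  shows "length (eigvals_desc A) = n"
    and "char_poly A = (\<Prod>a\<leftarrow>map complex_of_real (eigvals_desc A). [:- a, 1:])"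
    and "\<And>j j'. j \<le> j' \<Longrightarrow> j' < n \<Longrightarrow> eigvals_desc A ! j' \<le> eigvals_desc A ! j"
proof -
  obtain as where cp: "char_poly A = (\<Prod>a\<leftarrow>as. [:- a, 1:])" and len: "length as = n"
    using char_poly_factorized[OF A] by blast
  have pr: "proots (char_poly A) = mset as" unfolding cp proots_linear_prod ..
  have real: "complex_of_real (Re a) = a" if "a \<in> set as" for a
  proof (rule herm_eigenvalue_real[OF A h])
    show "eigenvalue A a" unfolding eigenvalue_root_char_poly[OF A] cp using that
      by (simp add: poly_prod_list prod_list_zero_iff)
  qed
  define L where "L = eigvals_desc A"
  have L: "L = rev (sorted_list_of_multiset (image_mset Re (mset as)))"
    unfolding L_def eigvals_desc_def pr ..
  have mL: "mset L = image_mset Re (mset as)" unfolding L by simp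
  show "length (eigvals_desc A) = n" unfolding L_def[symmetric] using mL len
    by (metis size_mset size_image_mset)
  have "mset (map complex_of_real L) = image_mset complex_of_real (image_mset Re (mset as))"
    using mL by simp
  also have "\<dots> = mset (map (\<lambda>x. complex_of_real (Re x)) as)" by (simp add: multiset.map_comp o_def)
  also have "map (\<lambda>x. complex_of_real (Re x)) as = as" by (rule map_idI) (rule real)
  
  finally have mm: "mset (map complex_of_real L) = mset as" .
  have "(\<Prod>a\<leftarrow>map complex_of_real L. [:- a, 1:]) = prod_mset (image_mset (\<lambda>a. [:- a, 1:]) (mset (map complex_of_real L)))"
    by (metis mset_map prod_mset_prod_list)
  also have "\<dots> = (\<Prod>a\<leftarrow>as. [:- a, 1:])" unfolding mm by (metis mset_map prod_mset_prod_list)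
  finally show "char_poly A = (\<Prod>a\<leftarrow>map complex_of_real (eigvals_desc A). [:- a, 1:])"
    unfolding cp L_def by (rule sym)
  fix j j' assume jj: "j \<le> j'" "j' < n"
  define S where "S = sorted_list_of_multiset (image_mset Re (mset as))"
  have lS: "length S = n" unfolding S_def using len by (metis size_mset size_image_mset mset_sorted_list_of_multiset)
  have sS: "sorted S" unfolding S_def by simp
  show "eigvals_desc A ! j' \<le> eigvals_desc A ! j"
    unfolding L_def[symmetric] L S_def[symmetric] using jj lS
    by (simp add: rev_nth sorted_nth_mono[OF sS])
qed

lemma mat_adjoint_adjoint: "mat_adjoint (mat_adjoint (M :: complex mat)) = M"
  by (rule eq_matI) auto

lemma herm_adjoint: assumes A: "A \<in> carrier_mat n n" and h: "hermitian A" shows "mat_adjoint A = A"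
proof (rule eq_matI)
  fix i j assume "i < dim_row A" "j < dim_col A"
  then show "mat_adjoint A $$ (i, j) = A $$ (i, j)" using herm_entry[OF h A, of i j] A by simp
qed (use A in auto)

lemma herm_spectral: assumes A: "A \<in> carrier_mat n n" and h: "hermitian A"
  shows "\<exists>U. edecomp n A U (\<lambda>j. eig A (Suc j))"
proof -
  define es where "es = map complex_of_real (eigvals_desc A)"
  note ep = eigvals_props[OF A h]
  obtain B P Q where sim: "similar_mat_wit A B P Q" and ut: "upper_triangular B"
    and dg: "diag_mat B = es" and QP: "Q = mat_adjoint P"
    using unitary_schur[OF A ep(2)[folded es_def]] by blast
  from similar_mat_witD2[OF A sim] have PQ: "P * Q = 1\<^sub>m n" "Q * P = 1\<^sub>m n" and AE: "A = P * B * Q"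
    and Bc: "B \<in> carrier_mat n n" and Pc: "P \<in> carrier_mat n n" and Qc: "Q \<in> carrier_mat n n" by auto
  have BQAP: "B = Q * A * P"
  proof -
    have "Q * A * P = Q * (P * B * Q) * P" using AE by simp
    also have "\<dots> = (Q * P) * B * (Q * P)" using Pc Qc Bc
      by (simp add: assoc_mult_mat[of _ n n _ n _ n])
    also have "\<dots> = B" using PQ Bc by simp
    finally show ?thesis by simp
  qed
  have Badj: "mat_adjoint B = B"
  proof -
    have "mat_adjoint B = mat_adjoint P * mat_adjoint A * mat_adjoint Q"
      unfolding BQAP using Pc Qc A
      by (simp add: mat_adjoint_mult[of _ n n _ n] assoc_mult_mat[of _ n n _ n _ n])
    also have "\<dots> = B" unfolding BQAP QP mat_adjoint_adjoint herm_adjoint[OF A h] ..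
    finally show ?thesis .
  qed
  have Bdiag: "B $$ (i,j) = 0" if "i < n" "j < n" "i \<noteq> j" for i j
  proof (cases "j < i")
    case True then show ?thesis using ut Bc that unfolding upper_triangular_def by auto
  next
    case False
    then have "B $$ (j,i) = 0" using ut Bc that unfolding upper_triangular_def by auto
    moreover have "B $$ (i,j) = cnj (B $$ (j,i))"
      using arg_cong[OF Badj, of "\<lambda>M. M $$ (i,j)"] Bc that by simp
    ultimately show ?thesis by simp
  qed
  have Bjj: "B $$ (j,j) = complex_of_real (eig A (Suc j))" if "j < n" for j
  proof -
    have "diag_mat B ! j = B $$ (j,j)" using Bc that unfolding diag_mat_def by simp
    then have "B $$ (j,j) = es ! j" using dg by simp
    then show ?thesis unfolding es_def eig_def using that ep(1) by simp
  qed
  have AP: "A * P = P * B"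
  proof -
    have "A * P = P * B * (Q * P)" using AE Pc Qc Bc by (simp add: assoc_mult_mat[of _ n n _ n _ n])
    then show ?thesis using PQ Pc Bc by simp
  qed
  define U where "U i j = P $$ (i,j)" for i j
  have "edecomp n A U (\<lambda>j. eig A (Suc j))"
    unfolding edecomp_def
  proof (intro conjI allI impI)
    fix j j' assume j: "j < n" "j' < n"
    have "(Q * P) $$ (j,j') = (\<Sum>i<n. cnj (U i j) * U i j')"
      using j Pc Qc unfolding QP U_def by (simp add: scalar_prod_def lessThan_atLeast0)
    then show "(\<Sum>i<n. cnj (U i j) * U i j') = (if j = j' then 1 else 0)" using PQ j by simp
  next
    fix i i' assume i: "i < n" "i' < n"
    have "(P * Q) $$ (i,i') = (\<Sum>j<n. U i j * cnj (U i' j))"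
      using i Pc Qc unfolding QP U_def by (simp add: scalar_prod_def lessThan_atLeast0)
    then show "(\<Sum>j<n. U i j * cnj (U i' j)) = (if i = i' then 1 else 0)" using PQ i by simp
  next
    fix i j assume ij: "i < n" "j < n"
    have "(A * P) $$ (i,j) = (\<Sum>i'<n. A $$ (i,i') * U i' j)"
      using ij Pc A unfolding U_def by (simp add: scalar_prod_def lessThan_atLeast0)
    moreover have "(P * B) $$ (i,j) = (\<Sum>k<n. P $$ (i,k) * B $$ (k,j))"
      using ij Pc Bc by (simp add: scalar_prod_def lessThan_atLeast0)
    moreover have "\<dots> = P $$ (i,j) * B $$ (j,j)"
      using Bdiag[of _ j] ij by (subst sum.remove[of _ j]) (auto intro!: sum.neutral)
    ultimately show "(\<Sum>i'<n. A $$ (i,i') * U i' j) = complex_of_real (eig A (Suc j)) * U i j"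
      using AP Bjj[OF ij(2)] unfolding U_def by (simp add: mult.commute)
  qed
  then show ?thesis by blast
qed


definition emb :: "nat \<Rightarrow> (nat \<Rightarrow> complex) \<Rightarrow> nat \<Rightarrow> complex" where
  "emb k y i = (if i < k then y i else if i = k then 0 else y (i - 1))"

definition dl :: "nat \<Rightarrow> (nat \<Rightarrow> complex) \<Rightarrow> nat \<Rightarrow> complex" where
  "dl k z j = z (insert_index k j)"

lemma sum_reindex_del:
  fixes f :: "nat \<Rightarrow> 'a :: comm_monoid_add"
  assumes k: "k < n"
  shows "(\<Sum>i<n. f i) = f k + (\<Sum>j<n-1. f (insert_index k j))"
proof -
  have inj: "inj_on (insert_index k) {..<n-1}" unfolding inj_on_def insert_index_def by auto
  have img: "insert_index k ` {..<n-1} = {..<n} - {k}"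
  proof (rule subset_antisym)
      show "insert_index k ` {..<n-1} \<subseteq> {..<n} - {k}"
        using k unfolding insert_index_def by auto
  next
    show "{..<n} - {k} \<subseteq> insert_index k ` {..<n-1}"
    proof
      fix i assume i: "i \<in> {..<n} - {k}"
      show "i \<in> insert_index k ` {..<n-1}"
      proof (cases "i < k")
        case True then show ?thesis using i k by (intro image_eqI[of _ _ i]) (auto simp: insert_index_def)
      next
        case False then show ?thesis using i k by (intro image_eqI[of _ _ "i - 1"]) (auto simp: insert_index_def)
      qed
    qed
  qed
  have "(\<Sum>i<n. f i) = f k + (\<Sum>i\<in>{..<n} - {k}. f i)" using k by (subst sum.remove[of _ k]) auto
  also have "(\<Sum>i\<in>{..<n} - {k}. f i) = (\<Sum>j<n-1. f (insert_index k j))"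
    unfolding img[symmetric] by (rule sum.reindex[OF inj, unfolded comp_def])
  finally show ?thesis .
qed

lemma emb_ins[simp]: "emb k y (insert_index k j) = y j"
  unfolding emb_def insert_index_def by auto

lemma emb_k[simp]: "emb k y k = 0"
  unfolding emb_def by auto

lemma dl_emb[simp]: "dl k (emb k y) = y"
  unfolding dl_def by auto

lemma emb_dl: assumes "z k = 0" shows "emb k (dl k z) = z"
proof
  fix i show "emb k (dl k z) i = z i" using assms unfolding emb_def dl_def insert_index_def by auto
qed

lemma ipn_emb: assumes "k < n" shows "ipn n z (emb k y) = ipn (n-1) (dl k z) y"
  unfolding ipn_def sum_reindex_del[OF assms] by (simp add: dl_def)

lemma ipn_emb2: assumes "k < n" shows "ipn n (emb k x) (emb k y) = ipn (n-1) x y"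
  using ipn_emb[OF assms, of "emb k x" y] by simp

lemma ipn_dl: assumes "k < n" "x k = 0" shows "ipn (n-1) (dl k z) (dl k x) = ipn n z x"
  using ipn_emb[OF assms(1), of z "dl k x"] emb_dl[of x k, OF assms(2)] by simp

lemma ipn_dl2: assumes "k < n" "x k = 0" "y k = 0" shows "ipn (n-1) (dl k x) (dl k y) = ipn n x y"
  using ipn_dl[of k n y x, OF assms(1,3)] .

lemma nrm2_dl: assumes "k < n" shows "nrm2 (n-1) (dl k z) = nrm2 n z - (cmod (z k))\<^sup>2"
  unfolding nrm2_def sum_reindex_del[OF assms, of "\<lambda>i. (cmod (z i))\<^sup>2"] by (simp add: dl_def)

lemma nrm2_emb: assumes "k < n" shows "nrm2 n (emb k y) = nrm2 (n-1) y"
  using nrm2_dl[OF assms, of "emb k y"] by simp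

lemma mat_delete_idx: assumes "A \<in> carrier_mat n n" "i < n - 1" "j < n - 1"
  shows "mat_delete A k k $$ (i,j) = A $$ (insert_index k i, insert_index k j)"
  using assms unfolding mat_delete_def insert_index_def by auto

lemma qf_emb: assumes A: "A \<in> carrier_mat n n" and k: "k < n"
  shows "qf n A (emb k y) = qf (n-1) (mat_delete A k k) y"
proof -
  have "qf n A (emb k y) = (\<Sum>i<n-1. \<Sum>i'<n. cnj (emb k y (insert_index k i)) * A $$ (insert_index k i, i') * emb k y i')"
    unfolding qf_def sum_reindex_del[OF k, of "\<lambda>i. \<Sum>i'<n. cnj (emb k y i) * A $$ (i, i') * emb k y i'"] by simp
  also have "\<dots> = (\<Sum>i<n-1. \<Sum>i'<n-1. cnj (y i) * A $$ (insert_index k i, insert_index k i') * y i')"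
  proof (rule sum.cong[OF refl])
    fix i
    show "(\<Sum>i'<n. cnj (emb k y (insert_index k i)) * A $$ (insert_index k i, i') * emb k y i') =
      (\<Sum>i'<n-1. cnj (y i) * A $$ (insert_index k i, insert_index k i') * y i')"
      unfolding sum_reindex_del[OF k, of "\<lambda>i'. cnj (emb k y (insert_index k i)) * A $$ (insert_index k i, i') * emb k y i'"]
      by simp
  qed
  also have "\<dots> = qf (n-1) (mat_delete A k k) y"
    unfolding qf_def using A by (intro sum.cong refl) (simp add: mat_delete_idx)
  finally show ?thesis .
qed

lemma herm_delete: assumes A: "A \<in> carrier_mat n n" and h: "hermitian A" and k: "k < n"
  shows "hermitian (mat_delete A k k)" "mat_delete A k k \<in> carrier_mat (n-1) (n-1)"
proof -
  show c: "mat_delete A k k \<in> carrier_mat (n-1) (n-1)" using mat_delete_carrier[OF A] .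
  have dr: "dim_row (mat_delete A k k) = n - 1" using A by simp
  have sq: "square_mat (mat_delete A k k)" using A by simp
  have "\<forall>i<dim_row (mat_delete A k k). \<forall>j<dim_row (mat_delete A k k). mat_delete A k k $$ (i, j) = cnj (mat_delete A k k $$ (j, i))"
  proof (intro allI impI)
    fix i j assume "i < dim_row (mat_delete A k k)" "j < dim_row (mat_delete A k k)"
    then have ij: "i < n - 1" "j < n - 1" unfolding dr .
    have "insert_index k i < n" "insert_index k j < n" using ij k unfolding insert_index_def by auto
    then show "mat_delete A k k $$ (i, j) = cnj (mat_delete A k k $$ (j, i))"
      unfolding mat_delete_idx[OF A ij] mat_delete_idx[OF A ij(2,1)] by (rule herm_entry[OF h A])
  qed
  then show "hermitian (mat_delete A k k)" using sq unfolding hermitian_def by blast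
qed

lemma qf_col: assumes ed: "edecomp m M V \<nu>" and j: "j < m"
  shows "Re (qf m M (\<lambda>i. V i j)) = \<nu> j"
proof -
  have "Re (qf m M (\<lambda>i. V i j)) = (\<Sum>j'<m. \<nu> j' * (cmod (ipn m (\<lambda>i. V i j') (\<lambda>i. V i j)))\<^sup>2)"
    by (rule re_qf_expand[OF ed])
  also have "\<dots> = (\<Sum>j'<m. if j' = j then \<nu> j' else 0)"
    using ed j unfolding edecomp_def ipn_def by (intro sum.cong refl) auto
  also have "\<dots> = \<nu> j" using j by simp
  finally show ?thesis .
qed

lemma orthn_cols: assumes ed: "edecomp m M V \<nu>" and "t \<le> m"
  shows "orthn m t (\<lambda>q i. V i q)"
  using ed assms(2) unfolding edecomp_def orthn_def ipn_def by auto


lemma qf_rank1: "qf m (mat m m (\<lambda>(i,j). g i * cnj (g j))) x = ipn m x g * ipn m g x"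
proof -
  have "qf m (mat m m (\<lambda>(i,j). g i * cnj (g j))) x = (\<Sum>i<m. \<Sum>i'<m. (cnj (x i) * g i) * (cnj (g i') * x i'))"
    unfolding qf_def by (intro sum.cong refl) (simp add: mult_ac)
  also have "\<dots> = ipn m x g * ipn m g x" unfolding ipn_def sum_product ..
  finally show ?thesis .
qed

lemma orth_compl: "\<exists>\<alpha>. orthn (Suc t) t \<alpha> \<and> (\<forall>q<t. ipn (Suc t) g (\<alpha> q) = 0)"
proof -
  define m where "m = Suc t"
  define M where "M = mat m m (\<lambda>(i,j). g i * cnj (g j))"
  have Mc: "M \<in> carrier_mat m m" unfolding M_def by simp
  have hM: "hermitian M" unfolding hermitian_def M_def by simp
  obtain Z where ed: "edecomp m M Z (\<lambda>j. eig M (Suc j))" using herm_spectral[OF Mc hM] by blast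
  define \<nu> where "\<nu> j = eig M (Suc j)" for j
  have ed': "edecomp m M Z \<nu>" using ed unfolding \<nu>_def .
  have mono: "\<nu> j' \<le> \<nu> j" if "j \<le> j'" "j' < m" for j j'
    using eigvals_props(3)[OF Mc hM that] unfolding \<nu>_def eig_def by simp
  have reqf: "Re (qf m M x) = (cmod (ipn m g x))\<^sup>2" for x
  proof -
    have "qf m M x = cnj (ipn m g x) * ipn m g x" unfolding M_def qf_rank1 cnj_ipn ..
    then show ?thesis by (simp add: of_real_cmod_sq'[symmetric])
  qed
  have nu: "\<nu> j = (cmod (ipn m g (\<lambda>i. Z i j)))\<^sup>2" if "j < m" for j
    using qf_col[OF ed' that] reqf by simp
  have nu0: "\<nu> j \<ge> 0" if "j < m" for j using nu[OF that] by simp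
  have sumnu: "(\<Sum>j<m. \<nu> j) = nrm2 m g"
  proof -
    have "(\<Sum>j<m. \<nu> j) = (\<Sum>j<m. (cmod (ipn m (\<lambda>i. Z i j) g))\<^sup>2)"
      using nu by (intro sum.cong refl) (metis cnj_ipn complex_mod_cnj lessThan_iff)
    also have "\<dots> = nrm2 m g" by (rule parseval[OF ed'])
    finally show ?thesis .
  qed
  have top: "nrm2 m g \<le> \<nu> 0"
  proof (cases "nrm2 m g = 0")
    case True then show ?thesis using nu0[of 0] unfolding m_def by simp
  next
    case False
    define N where "N = nrm2 m g"
    have N: "N > 0" using False unfolding N_def nrm2_def by (metis order_le_less sum_nonneg zero_le_power2 N_def False)
    define X where "X q i = complex_of_real (1 / sqrt N) * g i" for q :: nat and i
    have gg: "ipn m g g = of_real N" unfolding N_def nrm2_ipn ..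
    have ip: "ipn m g (X 0) = complex_of_real (1 / sqrt N) * of_real N"
    proof -
      have "ipn m g (X 0) = complex_of_real (1 / sqrt N) * ipn m g g"
        unfolding X_def ipn_def by (simp only: sum_distrib_left mult.left_commute)
      then show ?thesis unfolding gg .
    qed
    have "orthn m 1 X"
      unfolding orthn_def
    proof (intro allI impI)
      fix q q' :: nat assume "q < 1" "q' < 1"
      have "ipn m (X q) (X q') = complex_of_real (1 / sqrt N) * complex_of_real (1 / sqrt N) * ipn m g g"
        unfolding X_def ipn_def by (simp add: sum_distrib_left mult_ac)
      also have "\<dots> = complex_of_real (1 / sqrt N) * complex_of_real (1 / sqrt N) * of_real N" unfolding gg ..
      also have "\<dots> = 1" using N by (simp add: field_simps flip: of_real_mult)
      finally show "ipn m (X q) (X q') = (if q = q' then 1 else 0)" using \<open>q < 1\<close> \<open>q' < 1\<close> by simp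
    qed
    from kyfan_top[OF ed' this _ mono] have "Re (qf m M (X 0)) \<le> \<nu> 0" unfolding m_def by simp
    moreover have "Re (qf m M (X 0)) = N"
    proof -
      have "Re (qf m M (X 0)) = (cmod (complex_of_real (1 / sqrt N) * of_real N))\<^sup>2" unfolding reqf ip ..
      also have "cmod (complex_of_real (1 / sqrt N) * of_real N) = N / sqrt N"
      proof -
        have "complex_of_real (1 / sqrt N) * of_real N = complex_of_real (N / sqrt N)" by simp
        moreover have "N / sqrt N \<ge> 0" using N by simp
        ultimately show ?thesis by (simp only: norm_of_real abs_of_nonneg)
      qed
      also have "(N / sqrt N)\<^sup>2 = N" using N by (simp add: power_divide power2_eq_square)
      finally show ?thesis .
    qed
    ultimately show ?thesis unfolding N_def by simp
  qed
  have zero: "\<nu> j = 0" if "0 < j" "j < m" for j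
  proof -
    have "(\<Sum>j<m. \<nu> j) = \<nu> 0 + (\<Sum>j\<in>{..<m} - {0}. \<nu> j)"
      unfolding m_def by (subst sum.remove[of _ 0]) auto
    then have s0: "(\<Sum>j\<in>{..<m} - {0}. \<nu> j) \<le> 0" using sumnu top by simp
    have "(\<Sum>j\<in>{..<m} - {0}. \<nu> j) = 0" using s0 nu0 by (intro antisym s0 sum_nonneg) auto
    then have "\<forall>j\<in>{..<m} - {0}. \<nu> j = 0" using nu0 by (subst sum_nonneg_eq_0_iff[symmetric]) auto
    then show ?thesis using that by auto
  qed
  define \<alpha> where "\<alpha> q i = Z i (Suc q)" for q i
  have "orthn m t \<alpha>" unfolding orthn_def \<alpha>_def ipn_def using ed' unfolding edecomp_def m_def by auto
  moreover have "ipn m g (\<alpha> q) = 0" if "q < t" for q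
  proof -
    have "(cmod (ipn m g (\<alpha> q)))\<^sup>2 = 0" using nu[of "Suc q"] zero[of "Suc q"] that unfolding m_def \<alpha>_def by simp
    then show ?thesis by simp
  qed
  ultimately show ?thesis unfolding m_def by blast
qed

lemma frames:
  assumes ed: "edecomp n A U lam" and at: "a + t < n" and k: "k < n"
  shows "\<exists>X. orthn n t X \<and> (\<forall>q<t. X q k = 0) \<and>
    (\<forall>q<t. \<forall>i<n. (i < a \<or> a + t < i) \<longrightarrow> ipn n (\<lambda>r. U r i) (X q) = 0)"
proof -
  have orthU: "ipn n (\<lambda>r. U r i) (\<lambda>r. U r i') = (if i = i' then 1 else 0)" if "i < n" "i' < n" for i i'
    using ed that unfolding edecomp_def ipn_def by auto
  define g where "g p = cnj (U k (a + p))" for p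
  obtain \<alpha> where al: "orthn (Suc t) t \<alpha>" "\<And>q. q < t \<Longrightarrow> ipn (Suc t) g (\<alpha> q) = 0"
    using orth_compl[of t g] by blast
  define X where "X q r = (\<Sum>p<Suc t. \<alpha> q p * U r (a + p))" for q r
  have Xk: "X q k = 0" if "q < t" for q
  proof -
    have "X q k = ipn (Suc t) g (\<alpha> q)" unfolding X_def ipn_def g_def by (simp add: mult.commute)
    then show ?thesis using al(2)[OF that] by simp
  qed
  have ipUX: "ipn n (\<lambda>r. U r i) (X q) = (\<Sum>p<Suc t. if i = a + p then \<alpha> q p else 0)" if "i < n" for i q
  proof -
    have "ipn n (\<lambda>r. U r i) (X q) = (\<Sum>p<Suc t. \<alpha> q p * ipn n (\<lambda>r. U r i) (\<lambda>r. U r (a + p)))"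
      unfolding X_def by (rule ipn_lin_right)
    also have "\<dots> = (\<Sum>p<Suc t. if i = a + p then \<alpha> q p else 0)"
      using orthU that at by (intro sum.cong refl) auto
    finally show ?thesis .
  qed
  have supp: "ipn n (\<lambda>r. U r i) (X q) = 0" if "i < n" "i < a \<or> a + t < i" for i q
    unfolding ipUX[OF that(1)] using that(2) by (intro sum.neutral) auto
  have "orthn n t X"
    unfolding orthn_def
  proof (intro allI impI)
    fix q q' assume qq: "q < t" "q' < t"
    have "ipn n (X q) (X q') = (\<Sum>p<Suc t. cnj (\<alpha> q p) * ipn n (\<lambda>r. U r (a + p)) (X q'))"
      unfolding X_def[of q] by (rule ipn_lin_left)
    also have "\<dots> = (\<Sum>p<Suc t. cnj (\<alpha> q p) * \<alpha> q' p)"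
    proof (rule sum.cong[OF refl])
      fix p assume "p \<in> {..<Suc t}"
      then have p: "a + p < n" using at by auto
      have "ipn n (\<lambda>r. U r (a + p)) (X q') = \<alpha> q' p"
        unfolding ipUX[OF p] using \<open>p \<in> {..<Suc t}\<close> by (simp add: sum.delta)
      then show "cnj (\<alpha> q p) * ipn n (\<lambda>r. U r (a + p)) (X q') = cnj (\<alpha> q p) * \<alpha> q' p" by simp
    qed
    also have "\<dots> = ipn (Suc t) (\<alpha> q) (\<alpha> q')" unfolding ipn_def ..
    finally show "ipn n (X q) (X q') = (if q = q' then 1 else 0)" using al(1) qq unfolding orthn_def by simp
  qed
  then show ?thesis using Xk supp by blast
qed


locale cset =
  fixes A :: "complex mat" and n :: nat and U :: "nat \<Rightarrow> nat \<Rightarrow> complex" and lam :: "nat \<Rightarrow> real"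
    and V :: "nat \<Rightarrow> nat \<Rightarrow> nat \<Rightarrow> complex" and mu :: "nat \<Rightarrow> nat \<Rightarrow> real"
  assumes A: "A \<in> carrier_mat n n" and h: "hermitian A" and ed: "edecomp n A U lam"
    and mono: "\<And>j j'. j \<le> j' \<Longrightarrow> j' < n \<Longrightarrow> lam j' \<le> lam j"
    and edk: "\<And>k. k < n \<Longrightarrow> edecomp (n-1) (mat_delete A k k) (V k) (mu k)"
    and monok: "\<And>k j j'. k < n \<Longrightarrow> j \<le> j' \<Longrightarrow> j' < n - 1 \<Longrightarrow> mu k j' \<le> mu k j"
begin

definition cc :: "nat \<Rightarrow> nat \<Rightarrow> real" where
  "cc t i = (\<Sum>k<n. \<Sum>j<t. (cmod (ipn (n-1) (dl k (\<lambda>r. U r i)) (\<lambda>r. V k r j)))\<^sup>2)"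

lemma nrmU: "i < n \<Longrightarrow> nrm2 n (\<lambda>r. U r i) = 1" by (rule nrm2_col[OF ed])

lemma sumU: "i < n \<Longrightarrow> (\<Sum>k<n. (cmod (U k i))\<^sup>2) = 1" using nrmU unfolding nrm2_def by simp

lemma mu_expand: assumes k: "k < n" and j: "j < n - 1"
  shows "mu k j = (\<Sum>i<n. lam i * (cmod (ipn (n-1) (dl k (\<lambda>r. U r i)) (\<lambda>r. V k r j)))\<^sup>2)"
proof -
  have "mu k j = Re (qf (n-1) (mat_delete A k k) (\<lambda>r. V k r j))" using qf_col[OF edk[OF k] j] by simp
  also have "\<dots> = Re (qf n A (emb k (\<lambda>r. V k r j)))" using qf_emb[OF A k] by simp
  also have "\<dots> = (\<Sum>i<n. lam i * (cmod (ipn n (\<lambda>r. U r i) (emb k (\<lambda>r. V k r j))))\<^sup>2)"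
    by (rule re_qf_expand[OF ed])
  also have "\<dots> = (\<Sum>i<n. lam i * (cmod (ipn (n-1) (dl k (\<lambda>r. U r i)) (\<lambda>r. V k r j)))\<^sup>2)"
    using ipn_emb[OF k] by simp
  finally show ?thesis .
qed

lemma S_expand: assumes t: "t \<le> n - 1"
  shows "(\<Sum>k<n. \<Sum>j<t. mu k j) = (\<Sum>i<n. lam i * cc t i)"
proof -
  have "(\<Sum>k<n. \<Sum>j<t. mu k j) = (\<Sum>k<n. \<Sum>j<t. \<Sum>i<n. lam i * (cmod (ipn (n-1) (dl k (\<lambda>r. U r i)) (\<lambda>r. V k r j)))\<^sup>2)"
    using mu_expand t by (intro sum.cong refl) auto
  also have "\<dots> = (\<Sum>i<n. lam i * cc t i)"
    unfolding cc_def sum_distrib_left by (subst sum.swap) (rule sum.cong[OF refl], subst sum.swap, rule refl)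
  finally show ?thesis .
qed

lemma cc_full: assumes i: "i < n" and k: "k < n"
  shows "(\<Sum>j<n-1. (cmod (ipn (n-1) (dl k (\<lambda>r. U r i)) (\<lambda>r. V k r j)))\<^sup>2) = 1 - (cmod (U k i))\<^sup>2"
proof -
  have "(\<Sum>j<n-1. (cmod (ipn (n-1) (dl k (\<lambda>r. U r i)) (\<lambda>r. V k r j)))\<^sup>2)
      = (\<Sum>j<n-1. (cmod (ipn (n-1) (\<lambda>r. V k r j) (dl k (\<lambda>r. U r i))))\<^sup>2)"
    by (intro sum.cong refl) (metis cnj_ipn complex_mod_cnj)
  also have "\<dots> = nrm2 (n-1) (dl k (\<lambda>r. U r i))" by (rule parseval[OF edk[OF k]])
  also have "\<dots> = 1 - (cmod (U k i))\<^sup>2" using nrm2_dl[OF k] nrmU[OF i] by simp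
  finally show ?thesis .
qed

lemma cc_bounds: assumes t: "t \<le> n - 1" and i: "i < n"
  shows "0 \<le> cc t i" "cc t i \<le> real n - 1"
proof -
  show "0 \<le> cc t i" unfolding cc_def by (intro sum_nonneg) auto
  have "cc t i \<le> (\<Sum>k<n. \<Sum>j<n-1. (cmod (ipn (n-1) (dl k (\<lambda>r. U r i)) (\<lambda>r. V k r j)))\<^sup>2)"
    unfolding cc_def using t by (intro sum_mono sum_mono2) auto
  also have "\<dots> = (\<Sum>k<n. 1 - (cmod (U k i))\<^sup>2)" using cc_full[OF i] by (intro sum.cong) auto
  also have "\<dots> = real n - 1" using sumU[OF i] by (simp add: sum_subtractf)
  finally show "cc t i \<le> real n - 1" .
qed

lemma cc_sum: assumes t: "t \<le> n - 1"
  shows "(\<Sum>i<n. cc t i) = real n * real t"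
proof -
  have "(\<Sum>i<n. cc t i) = (\<Sum>k<n. \<Sum>j<t. \<Sum>i<n. (cmod (ipn (n-1) (dl k (\<lambda>r. U r i)) (\<lambda>r. V k r j)))\<^sup>2)"
    unfolding cc_def by (subst sum.swap) (rule sum.cong[OF refl], subst sum.swap, rule refl)
  also have "\<dots> = (\<Sum>k<n. \<Sum>j<t. (1::real))"
  proof (intro sum.cong refl)
    fix k j assume k: "k \<in> {..<n}" and j: "j \<in> {..<t}"
    then have k': "k < n" and j': "j < n - 1" using t by auto
    have "(\<Sum>i<n. (cmod (ipn (n-1) (dl k (\<lambda>r. U r i)) (\<lambda>r. V k r j)))\<^sup>2)
       = (\<Sum>i<n. (cmod (ipn n (\<lambda>r. U r i) (emb k (\<lambda>r. V k r j))))\<^sup>2)"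
      using ipn_emb[OF k'] by simp
    also have "\<dots> = nrm2 n (emb k (\<lambda>r. V k r j))" by (rule parseval[OF ed])
    also have "\<dots> = nrm2 (n-1) (\<lambda>r. V k r j)" by (rule nrm2_emb[OF k'])
    also have "\<dots> = 1" by (rule nrm2_col[OF edk[OF k'] j'])
    finally show "(\<Sum>i<n. (cmod (ipn (n-1) (dl k (\<lambda>r. U r i)) (\<lambda>r. V k r j)))\<^sup>2) = 1" .
  qed
  also have "\<dots> = real n * real t" by simp
  finally show ?thesis .
qed

lemma cc_top: assumes i: "i < n" shows "cc (n-1) i = real n - 1"
proof -
  have "cc (n-1) i = (\<Sum>k<n. 1 - (cmod (U k i))\<^sup>2)" unfolding cc_def using cc_full[OF i] by (intro sum.cong) auto
  also have "\<dots> = real n - 1" using sumU[OF i] by (simp add: sum_subtractf)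
  finally show ?thesis .
qed

lemma U1: assumes t: "t \<le> n - 1"
  shows "(\<Sum>k<n. \<Sum>j<t. mu k j) \<le> (real n - 1) * (\<Sum>i<t. lam i) + real t * lam t"
proof -
  have "(\<Sum>i\<in>{..<n}. lam i * cc t i) \<le> (real n - 1) * sum lam {..<t} + real t * lam t"
  proof (rule bathtub)
    show "{..<t} \<subseteq> {..<n}" using t by auto
    show "0 \<le> (lam i - lam t) * (real n - 1 - cc t i)" if "i \<in> {..<t}" for i
      using that t mono[of i t] cc_bounds[OF t, of i] by (intro mult_nonneg_nonneg) auto
    show "0 \<le> (lam t - lam i) * cc t i" if "i \<in> {..<n} - {..<t}" for i
      using that t mono[of t i] cc_bounds[OF t, of i] by (intro mult_nonneg_nonneg) auto
    show "sum (cc t) {..<n} = (real n - 1) * real (card {..<t}) + real t"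
      using cc_sum[OF t] by (simp add: algebra_simps)
  qed simp
  then show ?thesis using S_expand[OF t] by simp
qed

lemma frame_dl: assumes k: "k < n" and X: "orthn n t X" and Xk: "\<And>q. q < t \<Longrightarrow> X q k = 0"
  shows "orthn (n-1) t (\<lambda>q. dl k (X q))"
    and "\<And>q. q < t \<Longrightarrow> qf (n-1) (mat_delete A k k) (dl k (X q)) = qf n A (X q)"
proof -
  show "orthn (n-1) t (\<lambda>q. dl k (X q))" using X Xk ipn_dl2[OF k] unfolding orthn_def by simp
  fix q assume q: "q < t"
  show "qf (n-1) (mat_delete A k k) (dl k (X q)) = qf n A (X q)"
    using qf_emb[OF A k, of "dl k (X q)"] emb_dl[of "X q" k, OF Xk[OF q]] by simp
qed

lemma frame_sum:
  assumes X: "\<And>k. k < n \<Longrightarrow> orthn n t (X k)" and Xk: "\<And>k q. k < n \<Longrightarrow> q < t \<Longrightarrow> X k q k = 0"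
  defines "d \<equiv> \<lambda>i. (\<Sum>k<n. \<Sum>q<t. (cmod (ipn n (\<lambda>r. U r i) (X k q)))\<^sup>2)"
  shows "(\<Sum>k<n. \<Sum>q<t. Re (qf n A (X k q))) = (\<Sum>i<n. lam i * d i)"
    and "\<And>i. i < n \<Longrightarrow> 0 \<le> d i \<and> d i \<le> real n - 1"
    and "(\<Sum>i<n. d i) = real n * real t"
proof -
  show "(\<Sum>k<n. \<Sum>q<t. Re (qf n A (X k q))) = (\<Sum>i<n. lam i * d i)"
    unfolding re_qf_expand[OF ed] d_def sum_distrib_left
    by (subst sum.swap) (rule sum.cong[OF refl], subst sum.swap, rule refl)
  show "0 \<le> d i \<and> d i \<le> real n - 1" if i: "i < n" for i
  proof
    show "0 \<le> d i" unfolding d_def by (intro sum_nonneg) auto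
    have "d i \<le> (\<Sum>k<n. 1 - (cmod (U k i))\<^sup>2)"
      unfolding d_def
    proof (rule sum_mono)
      fix k assume "k \<in> {..<n}"
      then have k: "k < n" by simp
      have "(\<Sum>q<t. (cmod (ipn n (\<lambda>r. U r i) (X k q)))\<^sup>2) = (\<Sum>q<t. (cmod (ipn (n-1) (dl k (X k q)) (dl k (\<lambda>r. U r i))))\<^sup>2)"
      proof (rule sum.cong[OF refl])
        fix q assume "q \<in> {..<t}"
        then have q: "q < t" by simp
        have "ipn n (\<lambda>r. U r i) (X k q) = ipn (n-1) (dl k (\<lambda>r. U r i)) (dl k (X k q))"
          using ipn_dl[of k n "X k q" "\<lambda>r. U r i", OF k Xk[OF k q]] by simp
        then show "(cmod (ipn n (\<lambda>r. U r i) (X k q)))\<^sup>2 = (cmod (ipn (n-1) (dl k (X k q)) (dl k (\<lambda>r. U r i))))\<^sup>2"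
          by (metis cnj_ipn complex_mod_cnj)
      qed
      also have "\<dots> \<le> nrm2 (n-1) (dl k (\<lambda>r. U r i))"
        by (rule bessel[OF frame_dl(1)[OF k X[OF k] Xk[OF k]]])
      also have "\<dots> = 1 - (cmod (U k i))\<^sup>2" using nrm2_dl[OF k] nrmU[OF i] by simp
      finally show "(\<Sum>q<t. (cmod (ipn n (\<lambda>r. U r i) (X k q)))\<^sup>2) \<le> 1 - (cmod (U k i))\<^sup>2" .
    qed
    also have "\<dots> = real n - 1" using sumU[OF i] by (simp add: sum_subtractf)
    finally show "d i \<le> real n - 1" .
  qed
  have "(\<Sum>i<n. d i) = (\<Sum>k<n. \<Sum>q<t. \<Sum>i<n. (cmod (ipn n (\<lambda>r. U r i) (X k q)))\<^sup>2)"
    unfolding d_def by (subst sum.swap) (rule sum.cong[OF refl], subst sum.swap, rule refl)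
  also have "\<dots> = (\<Sum>k<n. \<Sum>q<t. (1::real))"
  proof (intro sum.cong refl)
    fix k q assume "k \<in> {..<n}" "q \<in> {..<t}"
    then show "(\<Sum>i<n. (cmod (ipn n (\<lambda>r. U r i) (X k q)))\<^sup>2) = 1"
      using parseval[OF ed, of "X k q"] nrm2_orthn[OF X] by simp
  qed
  also have "\<dots> = real n * real t" by simp
  finally show "(\<Sum>i<n. d i) = real n * real t" .
qed

lemma get_frames: assumes "a + t < n"
  shows "\<exists>XX. \<forall>k<n. orthn n t (XX k) \<and> (\<forall>q<t. XX k q k = 0) \<and>
    (\<forall>q<t. \<forall>i<n. (i < a \<or> a + t < i) \<longrightarrow> ipn n (\<lambda>r. U r i) (XX k q) = 0)"
proof -
  have "\<forall>k\<in>{..<n}. \<exists>X. orthn n t X \<and> (\<forall>q<t. X q k = 0) \<and>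
    (\<forall>q<t. \<forall>i<n. (i < a \<or> a + t < i) \<longrightarrow> ipn n (\<lambda>r. U r i) (X q) = 0)"
    using frames[OF ed assms] by blast
  then show ?thesis by (subst (asm) bchoice_iff) auto
qed

lemma L1: assumes s: "s \<le> n - 1" and n: "0 < n"
  shows "real s * lam 0 + (real n - 1) * (\<Sum>i\<in>{1..s}. lam i) \<le> (\<Sum>k<n. \<Sum>j<s. mu k j)"
proof -
  have "0 + s < n" using s n by simp
  from get_frames[OF this] obtain XX where XXa: "\<forall>k<n. orthn n s (XX k) \<and> (\<forall>q<s. XX k q k = 0) \<and>
    (\<forall>q<s. \<forall>i<n. (i < 0 \<or> 0 + s < i) \<longrightarrow> ipn n (\<lambda>r. U r i) (XX k q) = 0)" by blast
  have XX: "\<And>k. k < n \<Longrightarrow> orthn n s (XX k)" "\<And>k q. k < n \<Longrightarrow> q < s \<Longrightarrow> XX k q k = 0"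
    "\<And>k q i. k < n \<Longrightarrow> q < s \<Longrightarrow> i < n \<Longrightarrow> s < i \<Longrightarrow> ipn n (\<lambda>r. U r i) (XX k q) = 0"
    using XXa by auto
  define d where "d = (\<lambda>i. (\<Sum>k<n. \<Sum>q<s. (cmod (ipn n (\<lambda>r. U r i) (XX k q)))\<^sup>2))"
  have fs1: "(\<Sum>k<n. \<Sum>q<s. Re (qf n A (XX k q))) = (\<Sum>i<n. lam i * d i)"
    unfolding d_def by (rule frame_sum(1)[OF XX(1,2)])
  have fs2: "0 \<le> d i \<and> d i \<le> real n - 1" if "i < n" for i
    unfolding d_def by (rule frame_sum(2)[OF XX(1,2) that])
  have fs3: "(\<Sum>i<n. d i) = real n * real s"
    unfolding d_def by (rule frame_sum(3)[OF XX(1,2)])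
  note fs = fs1 fs2 fs3
  have d0: "d i = 0" if "i < n" "s < i" for i unfolding d_def using XX(3) that by simp
  have "(\<Sum>i\<in>{..<n}. (- lam i) * d i) \<le> (real n - 1) * sum (\<lambda>i. - lam i) {1..s} + real s * (- lam 0)"
  proof (rule bathtub)
    show "{1..s} \<subseteq> {..<n}" using s n by auto
    show "0 \<le> (- lam i - - lam 0) * (real n - 1 - d i)" if "i \<in> {1..s}" for i
      using that s n mono[of 0 i] fs(2)[of i] by (intro mult_nonneg_nonneg) auto
    show "0 \<le> (- lam 0 - - lam i) * d i" if "i \<in> {..<n} - {1..s}" for i
    proof (cases "i = 0")
      case False then have "d i = 0" using that d0 by auto
      then show ?thesis by simp
    qed simp
    show "sum d {..<n} = (real n - 1) * real (card {1..s}) + real s"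
      using fs(3) by (simp add: algebra_simps)
  qed simp
  then have "real s * lam 0 + (real n - 1) * (\<Sum>i\<in>{1..s}. lam i) \<le> (\<Sum>i<n. lam i * d i)"
    by (simp add: sum_negf)
  also have "\<dots> = (\<Sum>k<n. \<Sum>q<s. Re (qf n A (XX k q)))" using fs(1) by simp
  also have "\<dots> \<le> (\<Sum>k<n. \<Sum>j<s. mu k j)"
  proof (rule sum_mono)
    fix k assume "k \<in> {..<n}"
    then have k: "k < n" by simp
    have od: "orthn (n-1) s (\<lambda>q. dl k (XX k q))" by (rule frame_dl(1)[OF k XX(1)[OF k]]) (rule XX(2)[OF k])
    have qq: "qf (n-1) (mat_delete A k k) (dl k (XX k q)) = qf n A (XX k q)" if "q < s" for q
      by (rule frame_dl(2)[OF k XX(1)[OF k]]) (use XX(2)[OF k] that in auto)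
    have "(\<Sum>q<s. Re (qf n A (XX k q))) = (\<Sum>q<s. Re (qf (n-1) (mat_delete A k k) (dl k (XX k q))))"
      using qq by simp
    also have "\<dots> \<le> (\<Sum>j<s. mu k j)"
      by (rule kyfan_top[OF edk[OF k] od s]) (rule monok[OF k])
    finally show "(\<Sum>q<s. Re (qf n A (XX k q))) \<le> (\<Sum>j<s. mu k j)" .
  qed
  finally show ?thesis .
qed

lemma L2: assumes r: "r \<le> n - 1" and n: "0 < n"
  shows "(real n - 1) * (\<Sum>i<r. lam i) + real r * lam (n - 1) \<le> (\<Sum>k<n. \<Sum>j<r. mu k j)"
proof -
  define t where "t = n - 1 - r"
  have rt: "r + t = n - 1" unfolding t_def using r by simp
  have "r + t < n" using rt n by simp
  from get_frames[OF this] obtain XX where XXa: "\<forall>k<n. orthn n t (XX k) \<and> (\<forall>q<t. XX k q k = 0) \<and>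
    (\<forall>q<t. \<forall>i<n. (i < r \<or> r + t < i) \<longrightarrow> ipn n (\<lambda>r. U r i) (XX k q) = 0)" by blast
  have XX: "\<And>k. k < n \<Longrightarrow> orthn n t (XX k)" "\<And>k q. k < n \<Longrightarrow> q < t \<Longrightarrow> XX k q k = 0"
    "\<And>k q i. k < n \<Longrightarrow> q < t \<Longrightarrow> i < n \<Longrightarrow> i < r \<Longrightarrow> ipn n (\<lambda>r. U r i) (XX k q) = 0"
    using XXa by auto
  define d where "d = (\<lambda>i. (\<Sum>k<n. \<Sum>q<t. (cmod (ipn n (\<lambda>r. U r i) (XX k q)))\<^sup>2))"
  have fs1: "(\<Sum>k<n. \<Sum>q<t. Re (qf n A (XX k q))) = (\<Sum>i<n. lam i * d i)"
    unfolding d_def by (rule frame_sum(1)[OF XX(1,2)])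
  have fs2: "0 \<le> d i \<and> d i \<le> real n - 1" if "i < n" for i
    unfolding d_def by (rule frame_sum(2)[OF XX(1,2) that])
  have fs3: "(\<Sum>i<n. d i) = real n * real t"
    unfolding d_def by (rule frame_sum(3)[OF XX(1,2)])
  note fs = fs1 fs2 fs3
  have d0: "d i = 0" if "i < n" "i < r" for i unfolding d_def using XX(3) that by simp
  have cardJ: "card {r..<n-1} = t" unfolding t_def by simp
  have "(\<Sum>i\<in>{..<n}. lam i * d i) \<le> (real n - 1) * sum lam {r..<n-1} + real t * lam (n - 1)"
  proof (rule bathtub)
    show "{r..<n-1} \<subseteq> {..<n}" by auto
    show "0 \<le> (lam i - lam (n - 1)) * (real n - 1 - d i)" if "i \<in> {r..<n-1}" for i
      using that n mono[of i "n - 1"] fs(2)[of i] by (intro mult_nonneg_nonneg) auto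
    show "0 \<le> (lam (n - 1) - lam i) * d i" if "i \<in> {..<n} - {r..<n-1}" for i
    proof (cases "i < r")
      case True then have "d i = 0" using that d0 by auto
      then show ?thesis by simp
    next
      case False then have "i = n - 1" using that by auto
      then show ?thesis by simp
    qed
    show "sum d {..<n} = (real n - 1) * real (card {r..<n-1}) + real t"
      using fs(3) unfolding cardJ by (simp add: algebra_simps)
  qed simp
  moreover have "(\<Sum>i<n. lam i * d i) = (\<Sum>k<n. \<Sum>q<t. Re (qf n A (XX k q)))" using fs(1) by simp
  moreover have "(\<Sum>k<n. \<Sum>j\<in>{r..<n-1}. mu k j) \<le> (\<Sum>k<n. \<Sum>q<t. Re (qf n A (XX k q)))"
  proof (rule sum_mono)
    fix k assume "k \<in> {..<n}"
    then have k: "k < n" by simp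
    have od: "orthn (n-1) t (\<lambda>q. dl k (XX k q))" by (rule frame_dl(1)[OF k XX(1)[OF k]]) (rule XX(2)[OF k])
    have qq: "qf (n-1) (mat_delete A k k) (dl k (XX k q)) = qf n A (XX k q)" if "q < t" for q
      by (rule frame_dl(2)[OF k XX(1)[OF k]]) (use XX(2)[OF k] that in auto)
    have tn: "t \<le> n - 1" unfolding t_def by simp
    have nt: "n - 1 - t = r" using rt by linarith
    have "(\<Sum>j\<in>{r..<n-1}. mu k j) = (\<Sum>j\<in>{n-1-t..<n-1}. mu k j)" unfolding nt ..
    also have "\<dots> \<le> (\<Sum>q<t. Re (qf (n-1) (mat_delete A k k) (dl k (XX k q))))"
      by (rule kyfan_bot[OF edk[OF k] od tn]) (rule monok[OF k])
    also have "\<dots> = (\<Sum>q<t. Re (qf n A (XX k q)))"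
      using qq by simp
    finally show "(\<Sum>j\<in>{r..<n-1}. mu k j) \<le> (\<Sum>q<t. Re (qf n A (XX k q)))" .
  qed
  ultimately have B: "(\<Sum>k<n. \<Sum>j\<in>{r..<n-1}. mu k j) \<le> (real n - 1) * sum lam {r..<n-1} + real t * lam (n - 1)"
    by linarith
  have full: "(\<Sum>k<n. \<Sum>j<n-1. mu k j) = (real n - 1) * (\<Sum>i<n. lam i)"
    unfolding S_expand[OF order_refl] using cc_top by (simp add: sum_distrib_left mult.commute)
  have split1: "(\<Sum>j<n-1. mu k j) = (\<Sum>j<r. mu k j) + (\<Sum>j\<in>{r..<n-1}. mu k j)" for k
    using r by (simp add: lessThan_atLeast0 sum.atLeastLessThan_concat)
  have split2: "(\<Sum>i<n. lam i) = (\<Sum>i<r. lam i) + sum lam {r..<n-1} + lam (n - 1)"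
  proof -
    have "(\<Sum>i<n. lam i) = (\<Sum>i<n-1. lam i) + lam (n - 1)" using n
      by (metis Suc_pred' sum.lessThan_Suc)
    also have "(\<Sum>i<n-1. lam i) = (\<Sum>i<r. lam i) + sum lam {r..<n-1}"
      using r by (simp add: lessThan_atLeast0 sum.atLeastLessThan_concat)
    finally show ?thesis .
  qed
  have sp: "(\<Sum>k<n. \<Sum>j<n-1. mu k j) = (\<Sum>k<n. \<Sum>j<r. mu k j) + (\<Sum>k<n. \<Sum>j\<in>{r..<n-1}. mu k j)"
    unfolding split1 sum.distrib ..
  have tr: "real t = real n - 1 - real r" unfolding t_def using r n by (simp add: of_nat_diff)
  show ?thesis using B full split2 sp tr
    by (simp add: algebra_simps)
qed

end


lemma sum_shift1: "(\<Sum>k = 1..n. f k) = (\<Sum>k<n. f (Suc k) :: real)"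
  by (induct n) (auto simp: sum.cl_ivl_Suc)

lemma sum_shift2: assumes "1 \<le> a" shows "(\<Sum>j = a..b. f j) = (\<Sum>j\<in>{a-1..<b}. f (Suc j) :: real)"
proof -
  have "{a..b} = Suc ` {a-1..<b}" using assms
    by (auto simp: image_iff intro!: bexI[of _ "_ - 1"])
  moreover have "inj_on Suc {a-1..<b}" by simp
  ultimately show ?thesis by (intro sum.reindex_cong[of Suc "{a-1..<b}"]) auto
qed

lemma sum_diff_lt: fixes s r :: nat assumes "s \<le> r" shows "(\<Sum>j\<in>{s..<r}. f j) = (\<Sum>j<r. f j) - (\<Sum>j<s. f j :: real)"
proof -
  have "sum f {0..<s} + sum f {s..<r} = sum f {0..<r}"
    using sum.atLeastLessThan_concat[where m=0 and n=s and p=r and g=f] assms by simp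
  then show ?thesis by (simp add: lessThan_atLeast0)
qed

theorem corollary3p6:
  fixes A :: "complex mat" and n l r :: nat
  assumes "A \<in> carrier_mat n n" and "hermitian A" and "n \<ge> 2"
    and "1 \<le> l" and "l \<le> r" and "r \<le> n - 1"
  shows "real (n - l) * eig A l + real (n - 1) * (\<Sum>j = l + 1..r. eig A j) + real r * eig A n
           \<le> (\<Sum>k = 1..n. \<Sum>j = l..r. eig (principal_sub A k) j)
       \<and> (\<Sum>k = 1..n. \<Sum>j = l..r. eig (principal_sub A k) j)
           \<le> real (n - l) * eig A 1 + real (n - 1) * (\<Sum>j = l + 1..r. eig A j) + real r * eig A (r + 1)"
proof -
  note A = assms(1) and h = assms(2)
  define lam where "lam j = eig A (Suc j)" for j
  obtain U where ed: "edecomp n A U lam" using herm_spectral[OF A h] unfolding lam_def by blast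
  have mono: "lam j' \<le> lam j" if "j \<le> j'" "j' < n" for j j'
    using eigvals_props(3)[OF A h that] unfolding lam_def eig_def by simp
  define mu where "mu k j = eig (mat_delete A k k) (Suc j)" for k j
  have "\<forall>k\<in>{..<n}. \<exists>W. edecomp (n-1) (mat_delete A k k) W (mu k)"
  proof
    fix k assume "k \<in> {..<n}"
    then have k: "k < n" by simp
    show "\<exists>W. edecomp (n-1) (mat_delete A k k) W (mu k)"
      using herm_spectral[OF herm_delete(2)[OF A h k] herm_delete(1)[OF A h k]]
      unfolding mu_def by blast
  qed
  then obtain VV where edk: "\<And>k. k < n \<Longrightarrow> edecomp (n-1) (mat_delete A k k) (VV k) (mu k)"
    by (subst (asm) bchoice_iff) auto
  have monok: "mu k j' \<le> mu k j" if "k < n" "j \<le> j'" "j' < n - 1" for k j j'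
    using eigvals_props(3)[OF herm_delete(2)[OF A h that(1)] herm_delete(1)[OF A h that(1)] that(2,3)]
    unfolding mu_def eig_def by simp
  interpret cset A n U lam VV mu
    by unfold_locales (use A h ed mono edk monok in auto)
  define s where "s = l - 1"
  have ls: "l = Suc s" unfolding s_def using assms(4) by simp
  have n0: "0 < n" using assms(3) by simp
  define S where "S t = (\<Sum>k<n. \<Sum>j<t. mu k j)" for t
  have mid: "(\<Sum>k = 1..n. \<Sum>j = l..r. eig (principal_sub A k) j) = S r - S s"
  proof -
    have "(\<Sum>k = 1..n. \<Sum>j = l..r. eig (principal_sub A k) j) = (\<Sum>k<n. \<Sum>j = l..r. eig (principal_sub A (Suc k)) j)"
      by (rule sum_shift1)
    also have "\<dots> = (\<Sum>k<n. \<Sum>j\<in>{s..<r}. mu k j)"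
      unfolding sum_shift2[OF assms(4)] s_def mu_def principal_sub_def by simp
    also have "\<dots> = S r - S s"
    proof -
      have sr: "s \<le> r" using assms(5) ls by simp
      have "(\<Sum>j\<in>{s..<r}. mu k j) = (\<Sum>j<r. mu k j) - (\<Sum>j<s. mu k j)" for k
        by (rule sum_diff_lt[OF sr])
      then show ?thesis unfolding S_def by (simp add: sum_subtractf)
    qed
    finally show ?thesis .
  qed
  have lsum: "(\<Sum>j = l + 1..r. eig A j) = sum lam {l..<r}"
    unfolding sum_shift2[of "l + 1", OF le_add2] lam_def by simp
  have e1: "eig A l = lam s" "eig A n = lam (n - 1)" "eig A 1 = lam 0" "eig A (r + 1) = lam r"
    unfolding lam_def using ls n0 by auto
  have sr1: "(\<Sum>i<r. lam i) = (\<Sum>i<s. lam i) + lam s + sum lam {l..<r}"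
  proof -
    have "(\<Sum>i<r. lam i) = (\<Sum>i<l. lam i) + sum lam {l..<r}"
      using assms(5) by (simp add: lessThan_atLeast0 sum.atLeastLessThan_concat)
    moreover have "(\<Sum>i<l. lam i) = (\<Sum>i<s. lam i) + lam s" unfolding ls by simp
    ultimately show ?thesis by simp
  qed
  have sr2: "(\<Sum>i<r. lam i) = lam 0 + sum lam {1..s} + sum lam {l..<r}"
  proof -
    have "(\<Sum>i<l. lam i) = lam 0 + sum lam {1..s}"
      unfolding ls by (simp add: lessThan_Suc_atMost atLeast1_atMost_eq_remove0 sum.remove)
    moreover have "(\<Sum>i<r. lam i) = (\<Sum>i<l. lam i) + sum lam {l..<r}"
      using assms(5) by (simp add: lessThan_atLeast0 sum.atLeastLessThan_concat)
    ultimately show ?thesis by simp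
  qed
  have sn: "s \<le> n - 1" "r \<le> n - 1" using assms(5,6) ls by auto
  have Ur: "S r \<le> (real n - 1) * (\<Sum>i<r. lam i) + real r * lam r" unfolding S_def by (rule U1[OF sn(2)])
  have Us: "S s \<le> (real n - 1) * (\<Sum>i<s. lam i) + real s * lam s" unfolding S_def by (rule U1[OF sn(1)])
  have Ls: "real s * lam 0 + (real n - 1) * sum lam {1..s} \<le> S s" unfolding S_def by (rule L1[OF sn(1) n0])
  have Lr: "(real n - 1) * (\<Sum>i<r. lam i) + real r * lam (n - 1) \<le> S r" unfolding S_def by (rule L2[OF sn(2) n0])
  have rl: "real (n - l) = real n - 1 - real s" using assms(4,5,6) ls by (simp add: of_nat_diff)
  have rn: "real (n - 1) = real n - 1" using n0 by (simp add: of_nat_diff)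
  show ?thesis unfolding mid lsum e1 rl rn
  proof
    show "(real n - 1 - real s) * lam s + (real n - 1) * sum lam {l..<r} + real r * lam (n - 1) \<le> S r - S s"
      using Lr Us sr1 by (simp add: algebra_simps)
    show "S r - S s \<le> (real n - 1 - real s) * lam 0 + (real n - 1) * sum lam {l..<r} + real r * lam r"
      using Ur Ls sr2 by (simp add: algebra_simps)
  qed
qed


end
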